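(* Let $B$ be a Ferrers board with $n$ columns, padded with columns of height zero on the left so that its root vector $\xi(B)=\langle z_1,\ldots,z_n\rangle$ has only non-negative entries. For each integer $k$ let $v_k$ be the number of entries of $\xi(B)$ equal to $k$, and let $M$ be the greatest integer with $v_M\neq 0$. Then the rook equivalence graph $G(B)$ is connected if and only if, for every $0\le i<M-1$, $v_i>1$ implies $v_{i+1}>1$.
   Context: A Ferrers board is given by a weakly increasing sequence of non-negative integers $B=(b_1,\ldots,b_n)$ of column heights; it is the set of unit cells in the first quadrant lying in column $i$ and rows $1,\ldots,b_i$. Prepending columns of height $0$ on the left does not change the board, and boards are compared using the same number of columns by such padding. A placement of $k$ rooks on $B$ is a set of $k$ cells of $B$ no two in the same row or column; $r_k(B)$ is the number of such placements. Two boards are rook equivalent if they have equal $r_k$ for all $k\ge 0$. The root vector of $B$ is $\xi(B)=\langle 0-b_1,1-b_2,\ldots,(n-1)-b_n\rangle$. The rook equivalence graph $G(B)$ has as vertices all Ferrers boards rook equivalent to $B$, and $\{B_1,B_2\}$ is an edge iff, written with the same number of columns, $B_1$ and $B_2$ differ in exactly two columns $i$ and $j$, where $B_1$ has $k$ more cells than $B_2$ in column $i$ and $k$ fewer cells than $B_2$ in column $j$, for some $k>0$. *)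

theory Defs
  imports Main
begin

text \<open>A Ferrers board is represented by the list of its column heights
  (b_1,...,b_n), weakly increasing.  Lists differing only by leading zero
  columns represent the same board.\<close>

definition ferrers :: "nat list \<Rightarrow> bool" where
  "ferrers b \<longleftrightarrow> sorted b"

definition canonical_board :: "nat list \<Rightarrow> bool" where
  "canonical_board b \<longleftrightarrow> ferrers b \<and> 0 \<notin> set b"

definition cells :: "nat list \<Rightarrow> (nat \<times> nat) set" where
  "cells b = {(i, j). i < length b \<and> 1 \<le> j \<and> j \<le> b ! i}"

definition rook_placement :: "nat list \<Rightarrow> (nat \<times> nat) set \<Rightarrow> bool" where
  "rook_placement b S \<longleftrightarrow> S \<subseteq> cells b \<and>
     (\<forall>p\<in>S. \<forall>q\<in>S. p \<noteq> q \<longrightarrow> fst p \<noteq> fst q \<and> snd p \<noteq> snd q)"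

definition rook_num :: "nat \<Rightarrow> nat list \<Rightarrow> nat" where
  "rook_num k b = card {S. rook_placement b S \<and> card S = k}"

definition rook_equiv :: "nat list \<Rightarrow> nat list \<Rightarrow> bool" where
  "rook_equiv b c \<longleftrightarrow> (\<forall>k. rook_num k b = rook_num k c)"

definition root_vector :: "nat list \<Rightarrow> int list" where
  "root_vector b = map (\<lambda>i. int i - int (b ! i)) [0..<length b]"

definition pad :: "nat \<Rightarrow> nat list \<Rightarrow> nat list" where
  "pad N b = replicate (N - length b) 0 @ b"

definition rook_edge :: "nat list \<Rightarrow> nat list \<Rightarrow> bool" where
  "rook_edge b1 b2 \<longleftrightarrow>
     (let N = max (length b1) (length b2); p1 = pad N b1; p2 = pad N b2 in
      \<exists>i j k. i < N \<and> j < N \<and> i \<noteq> j \<and> k > 0 \<and>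
        p1 ! i = p2 ! i + k \<and> p1 ! j + k = p2 ! j \<and>
        (\<forall>l<N. l \<noteq> i \<and> l \<noteq> j \<longrightarrow> p1 ! l = p2 ! l))"

definition rook_vertices :: "nat list \<Rightarrow> nat list set" where
  "rook_vertices b = {c. canonical_board c \<and> rook_equiv b c}"

definition rook_graph_connected :: "nat list \<Rightarrow> bool" where
  "rook_graph_connected b \<longleftrightarrow>
     (\<forall>c1\<in>rook_vertices b. \<forall>c2\<in>rook_vertices b.
        (\<lambda>x y. x \<in> rook_vertices b \<and> y \<in> rook_vertices b \<and> rook_edge x y)\<^sup>*\<^sup>* c1 c2)"

definition root_count :: "nat list \<Rightarrow> int \<Rightarrow> nat" where
  "root_count b k = length (filter (\<lambda>z. z = k) (root_vector b))"

end

theory Submission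
  imports Defs "HOL-Library.Multiset" "HOL-Computational_Algebra.Polynomial"
begin


definition valid :: "int list \<Rightarrow> bool" where
  "valid z \<longleftrightarrow> (\<forall>k<length z. 0 \<le> z!k) \<and> (z \<noteq> [] \<longrightarrow> z!0 = 0) \<and>
     (\<forall>k. Suc k < length z \<longrightarrow> z!Suc k \<le> z!k + 1)"

definition is_swap :: "int list \<Rightarrow> int list \<Rightarrow> bool" where
  "is_swap x y \<longleftrightarrow> (\<exists>i j. i < length x \<and> j < length x \<and> x!i \<noteq> x!j \<and> y = x[i := x!j, j := x!i])"

definition swp :: "int multiset \<Rightarrow> int list \<Rightarrow> int list \<Rightarrow> bool" where
  "swp V x y \<longleftrightarrow> valid x \<and> valid y \<and> mset x = V \<and> mset y = V \<and> is_swap x y"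

definition condC :: "int multiset \<Rightarrow> bool" where
  "condC V \<longleftrightarrow> (\<forall>i. 0 \<le> i \<and> i < Max (set_mset V) - 1 \<longrightarrow> count V i > 1 \<longrightarrow> count V (i+1) > 1)"

lemma climb:
  assumes "valid z" "r < length z" "0 \<le> w" "w \<le> z!r"
  shows "\<exists>s\<le>r. z!s = w"
  using assms(2,4)
proof (induction r)
  case 0
  then show ?case using assms(1,3) unfolding valid_def by (auto intro!: exI[of _ 0])
next
  case (Suc r)
  show ?case
  proof (cases "z!Suc r = w")
    case True then show ?thesis by auto
  next
    case False
    have "z!Suc r \<le> z!r + 1" using assms(1) Suc.prems unfolding valid_def by auto
    then have "w \<le> z!r" using False Suc.prems by auto
    then obtain s where "s \<le> r" "z!s = w" using Suc.IH Suc.prems by auto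
    then show ?thesis by (intro exI[of _ s]) auto
  qed
qed

lemma count_two:
  assumes "i \<noteq> j" "i < length xs" "j < length xs" "xs!i = a" "xs!j = a"
  shows "count (mset xs) a \<ge> 2"
proof -
  have "count (mset xs) a = card {k. k < length xs \<and> a = xs!k}"
    by (simp add: count_mset count_list_eq_length_filter length_filter_conv_card)
  also have "\<dots> \<ge> card {i, j}"
    by (rule card_mono) (use assms in auto)
  finally show ?thesis using assms(1) by simp
qed

lemma count_two_obtain:
  assumes "count (mset xs) a \<ge> 2"
  shows "\<exists>i j. i < j \<and> j < length xs \<and> xs!i = a \<and> xs!j = a"
proof -
  define S where "S = {k. k < length xs \<and> a = xs!k}"
  have cS: "card S \<ge> 2" using assms unfolding S_def by (simp add: count_mset count_list_eq_length_filter length_filter_conv_card)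
  have fS: "finite S" unfolding S_def by auto
  then have "S \<noteq> {}" using cS by auto
  define i where "i = Min S"
  have iS: "i \<in> S" unfolding i_def using fS \<open>S \<noteq> {}\<close> by auto
  have "card (S - {i}) \<ge> 1" using cS iS fS by auto
  then obtain j where "j \<in> S - {i}" by (metis card.empty ex_in_conv not_one_le_zero)
  then have "i < j" unfolding i_def using fS by (metis DiffE Min_le insertI1 le_neq_implies_less)
  then show ?thesis using iS \<open>j \<in> S - {i}\<close> unfolding S_def by auto
qed

lemma is_swap_sym: "is_swap x y \<Longrightarrow> is_swap y x"
  unfolding is_swap_def
proof (elim exE conjE)
  fix i j assume h: "i < length x" "j < length x" "x!i \<noteq> x!j" "y = x[i := x!j, j := x!i]"
  then have ij: "i \<noteq> j" by auto
  have yi: "y!i = x!j" "y!j = x!i" using h ij by (auto simp: nth_list_update)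
  have C: "x = y[i := y!j, j := y!i]"
    unfolding yi using h ij by (intro nth_equalityI) (auto simp: nth_list_update)
  have ly: "length y = length x" using h(4) by simp
  have A: "i < length y" "j < length y" using h(1,2) ly by auto
  have B: "y!i \<noteq> y!j" using yi h(3) by simp
  show "\<exists>i j. i < length y \<and> j < length y \<and> y ! i \<noteq> y ! j \<and> x = y[i := y ! j, j := y ! i]"
    using A B C by blast
qed

lemma swp_sym: "swp V x y \<Longrightarrow> swp V y x"
  unfolding swp_def using is_swap_sym by blast

lemma swp_rtc_sym: "(swp V)\<^sup>*\<^sup>* x y \<Longrightarrow> (swp V)\<^sup>*\<^sup>* y x"
proof (induction rule: rtranclp.induct)
  case (rtrancl_refl a) then show ?case by simp
next
  case (rtrancl_into_rtrancl a b c)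
  have "swp V c b" using swp_sym rtrancl_into_rtrancl.hyps(2) by blast
  then show ?case using rtrancl_into_rtrancl.IH by (rule converse_rtranclp_into_rtranclp)
qed

lemma valid_butlast: "valid z \<Longrightarrow> valid (butlast z)"
proof -
  assume v: "valid z"
  have L: "length (butlast z) = length z - 1" by simp
  have N: "\<And>k. k < length (butlast z) \<Longrightarrow> butlast z ! k = z ! k" by (simp add: nth_butlast)
  show ?thesis unfolding valid_def
  proof (intro conjI allI impI)
    fix k assume "k < length (butlast z)" then show "0 \<le> butlast z ! k" using v N L unfolding valid_def by auto
  next
    assume "butlast z \<noteq> []" then have "0 < length (butlast z)" by (metis length_greater_0_conv)
    then have "butlast z ! 0 = z ! 0" using N[of 0] by blast
    then show "butlast z ! 0 = 0" using v \<open>butlast z \<noteq> []\<close> unfolding valid_def by auto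
  next
    fix k assume "Suc k < length (butlast z)" then show "butlast z ! Suc k \<le> butlast z ! k + 1"
      using v N[of k] N[of "Suc k"] L unfolding valid_def by auto
  qed
qed

lemma valid_snoc:
  assumes "valid y" "0 \<le> t" "y \<noteq> [] \<longrightarrow> t \<le> last y + 1" "y = [] \<longrightarrow> t = 0"
  shows "valid (y @ [t])"
  unfolding valid_def
proof (intro conjI allI impI)
  fix k assume "k < length (y @ [t])" then show "0 \<le> (y @ [t]) ! k"
    using assms unfolding valid_def by (auto simp: nth_append less_Suc_eq)
next
  show "(y @ [t]) ! 0 = 0" using assms unfolding valid_def by (cases y) auto
next
  fix k assume k: "Suc k < length (y @ [t])"
  show "(y @ [t]) ! Suc k \<le> (y @ [t]) ! k + 1"
  proof (cases "Suc k < length y")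
    case True then show ?thesis using assms k unfolding valid_def by (auto simp: nth_append)
  next
    case False
    then have "Suc k = length y" using k by auto
    then have "y \<noteq> []" by auto
    then have "last y = y ! k" using \<open>Suc k = length y\<close> by (metis diff_Suc_1 last_conv_nth)
    then show ?thesis using assms \<open>Suc k = length y\<close> by (auto simp: nth_append)
  qed
qed

lemma is_swap_mset: "is_swap x y \<Longrightarrow> mset y = mset x"
  unfolding is_swap_def
proof (elim exE conjE)
  fix i j assume h: "i < length x" "j < length x" "x!i \<noteq> x!j" "y = x[i := x!j, j := x!i]"
  then have "i \<noteq> j" by auto
  then have "y = x[j := x!i, i := x!j]" using h(4) by (simp add: list_update_swap)
  then show "mset y = mset x" using mset_swap[OF h(1,2)] by simp
qed

lemma last_ge_t:
  assumes v: "valid z" and ne: "z \<noteq> []" and t: "t \<in> set z" and c: "\<forall>j<t. count (mset z) j \<le> 1"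
  shows "t \<le> last z"
proof (rule ccontr)
  assume "\<not> t \<le> last z"
  then have lt: "last z < t" by simp
  define n where "n = length z"
  have n: "n \<ge> 1" using ne unfolding n_def by (cases z) auto
  have le: "last z = z!(n-1)" using ne unfolding n_def by (simp add: last_conv_nth)
  obtain r where r: "r < n" "z!r = t" using t unfolding n_def by (metis in_set_conv_nth)
  have "r \<noteq> n-1" using r lt le by auto
  then have rn: "r < n - 1" using r by auto
  have "0 \<le> last z" using v n le unfolding valid_def n_def by auto
  then obtain s where s: "s \<le> r" "z!s = last z" using climb[OF v, of r "last z"] r lt unfolding n_def by auto
  have "count (mset z) (last z) \<ge> 2"
    by (rule count_two[of s "n-1"]) (use s rn le n in \<open>auto simp: n_def\<close>)
  then show False using c lt by force
qed

lemma step_down: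
  assumes v: "valid z" and ne: "z \<noteq> []" and c: "count (mset z) (last z - 1) \<ge> 2"
  shows "\<exists>z'. swp (mset z) z z' \<and> last z' < last z"
proof -
  define n where "n = length z"
  define e where "e = last z"
  have le: "e = z!(n-1)" using ne unfolding n_def e_def by (simp add: last_conv_nth)
  obtain p0 p1 where p: "p0 < p1" "p1 < n" "z!p0 = e-1" "z!p1 = e-1"
    using count_two_obtain[OF c] unfolding n_def e_def by auto
  have "p1 \<noteq> n-1" using p le by auto
  then have p1n: "p1 < n-1" using p by auto
  define q where "q = (LEAST q. p0 < q \<and> z!q < e)"
  have q: "p0 < q \<and> z!q < e" unfolding q_def by (rule LeastI[of _ p1]) (use p in auto)
  have qp1: "q \<le> p1" unfolding q_def by (rule Least_le) (use p in auto)
  have prev: "e \<le> z!(q-1) + 1"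
  proof (cases "q - 1 = p0")
    case True then show ?thesis using p by auto
  next
    case False
    then have "p0 < q - 1" "q - 1 < q" using q by auto
    have "\<not> (p0 < q - 1 \<and> z!(q-1) < e)"
      using not_less_Least[of "q-1" "\<lambda>q. p0 < q \<and> z!q < e"] \<open>q - 1 < q\<close> unfolding q_def by blast
    then show ?thesis using \<open>p0 < q - 1\<close> by auto
  qed
  have qn: "q < n - 1" using qp1 p1n by auto
  have q1: "1 \<le> q" using q by auto
  have steps: "\<And>k. Suc k < n \<Longrightarrow> z!Suc k \<le> z!k + 1" using v unfolding valid_def n_def by auto
  have nonneg: "\<And>k. k < n \<Longrightarrow> 0 \<le> z!k" using v unfolding valid_def n_def by auto
  have z0: "z!0 = 0" using v ne unfolding valid_def by auto
  have n2: "Suc (n-2) = n-1" "Suc (n-2) < n" using qn by auto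
  have lastprev: "e \<le> z!(n-2) + 1" using steps[OF n2(2)] le unfolding n2(1) by simp
  define z' where "z' = z[q := z!(n-1), n-1 := z!q]"
  have lz': "length z' = n" unfolding z'_def n_def by simp
  have nl: "n - 1 < length z" "q < length z" using qn unfolding n_def by auto
  have z'n: "z'!(n-1) = z!q" unfolding z'_def using nl by simp
  have z'q: "z'!q = e" unfolding z'_def using qn le nl by simp
  have z'o: "\<And>k. k \<noteq> q \<Longrightarrow> k \<noteq> n-1 \<Longrightarrow> z'!k = z!k" unfolding z'_def by simp
  have sw: "is_swap z z'"
    unfolding is_swap_def z'_def using qn q le unfolding n_def by (intro exI[of _ q] exI[of _ "length z - 1"]) auto
  have vz': "valid z'"
    unfolding valid_def
  proof (intro conjI allI impI)
    fix k assume "k < length z'"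
    then have k: "k < n" using lz' by simp
    have "0 \<le> z!(n-1)" "0 \<le> z!q" using nonneg qn by auto
    then show "0 \<le> z'!k" using z'n z'q z'o[of k] nonneg[OF k] le by (cases "k = q"; cases "k = n-1") auto
  next
    show "z'!0 = 0" using z'o[of 0] q1 qn z0 by auto
  next
    fix k assume k: "Suc k < length z'"
    then have k': "Suc k < n" using lz' by simp
    consider "Suc k = q" | "Suc k = n-1" "k = q" | "Suc k = n-1" "k \<noteq> q" | "k = q" "Suc k \<noteq> n-1"
      | "Suc k \<noteq> q" "Suc k \<noteq> n-1" "k \<noteq> q" by blast
    then show "z'!Suc k \<le> z'!k + 1"
    proof cases
      case 1
      then have "z'!k = z!(q-1)" using z'o[of k] qn by auto
      then show ?thesis using 1 z'q prev by simp
    next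
      case 2 then show ?thesis using z'n z'q q by simp
    next
      case 3
      then have "k = n - 2" by auto
      then have "z'!k = z!(n-2)" using z'o[of k] 3 by auto
      then show ?thesis using 3 z'n q lastprev by simp
    next
      case 4
      then have "z'!Suc k = z!Suc q" using z'o[of "Suc k"] by auto
      then show ?thesis using 4 z'q steps[of q] k' q by simp
    next
      case 5
      then have "k \<noteq> n-1" using k' by auto
      then show ?thesis using 5 z'o steps[OF k'] by simp
    qed
  qed
  have "z' \<noteq> []" using lz' qn by auto
  then have "last z' = z'!(n-1)" using lz' by (simp add: last_conv_nth)
  then have "last z' = z!q" using z'n by simp
  then have "last z' < e" using q by simp
  moreover have "swp (mset z) z z'" unfolding swp_def using v vz' sw is_swap_mset[OF sw] by simp
  ultimately show ?thesis unfolding e_def by blast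
qed

lemma valid_nonneg: "valid z \<Longrightarrow> x \<in> set z \<Longrightarrow> 0 \<le> x"
  unfolding valid_def by (metis in_set_conv_nth)

lemma to_last_t:
  assumes "valid z" "z \<noteq> []" "t \<in> set z" "\<forall>j<t. count (mset z) j \<le> 1"
    "\<forall>j. t \<le> j \<and> j < Max (set z) \<longrightarrow> count (mset z) j \<ge> 2"
  shows "\<exists>z'. (swp (mset z))\<^sup>*\<^sup>* z z' \<and> valid z' \<and> mset z' = mset z \<and> last z' = t"
  using assms
proof (induction "nat (last z)" arbitrary: z rule: less_induct)
  case less
  show ?case
  proof (cases "last z = t")
    case True then show ?thesis using less.prems by blast
  next
    case False
    have ge: "t \<le> last z" by (rule last_ge_t) (use less.prems in auto)
    have lin: "last z \<in> set z" using less.prems(2) by simp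
    have "last z \<le> Max (set z)" using lin by simp
    then have "count (mset z) (last z - 1) \<ge> 2" using less.prems(5) ge False by auto
    then obtain z1 where z1: "swp (mset z) z z1" "last z1 < last z"
      using step_down[OF less.prems(1,2)] by blast
    have v1: "valid z1" and m1: "mset z1 = mset z" using z1 unfolding swp_def by auto
    have s1: "set z1 = set z" using m1 by (metis set_mset_mset)
    have ne1: "z1 \<noteq> []" using m1 less.prems(2) by auto
    have "0 \<le> last z1" using valid_nonneg[OF v1, of "last z1"] ne1 by simp
    then have lt: "nat (last z1) < nat (last z)" using z1(2) by simp
    obtain z2 where z2: "(swp (mset z1))\<^sup>*\<^sup>* z1 z2" "valid z2" "mset z2 = mset z1" "last z2 = t"
      using less.hyps[OF lt v1 ne1] less.prems(3-5) s1 m1 by auto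
    show ?thesis using z1(1) z2 m1 by (intro exI[of _ z2]) (auto intro: converse_rtranclp_into_rtranclp)
  qed
qed

lemma choose_t:
  assumes c: "condC V" and ne: "V \<noteq> {#}" and nn: "\<forall>x\<in>#V. 0 \<le> x"
  shows "\<exists>t. t \<in># V \<and> (\<forall>j<t. count V j \<le> 1) \<and> (\<forall>j. t \<le> j \<and> j < Max (set_mset V) \<longrightarrow> count V j \<ge> 2)"
proof (cases "\<exists>j. count V j \<ge> 2")
  case True
  then obtain j where j: "count V j \<ge> 2" by blast
  then have "j \<in># V" by (metis count_greater_zero_iff gr0I not_numeral_le_zero)
  then have j0: "0 \<le> j" using nn by auto
  define k where "k = (LEAST k::nat. count V (int k) \<ge> 2)"
  define t where "t = int k"
  have tk: "count V t \<ge> 2" unfolding t_def k_def by (rule LeastI[of _ "nat j"]) (use j j0 in auto)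
  have tin: "t \<in># V" using tk by (metis count_greater_zero_iff gr0I not_numeral_le_zero)
  have below: "\<forall>j<t. count V j \<le> 1"
  proof (intro allI impI)
    fix i assume "i < t"
    show "count V i \<le> 1"
    proof (cases "0 \<le> i")
      case True
      then have "nat i < k" using \<open>i < t\<close> unfolding t_def by auto
      then have "\<not> count V (int (nat i)) \<ge> 2" unfolding k_def by (rule not_less_Least)
      then show ?thesis using True by auto
    next
      case False
      then have "i \<notin># V" using nn by auto
      then show ?thesis by (simp add: not_in_iff)
    qed
  qed
  have up: "\<forall>d::nat. t + int d < Max (set_mset V) \<longrightarrow> count V (t + int d) \<ge> 2"
  proof
    fix d show "t + int d < Max (set_mset V) \<longrightarrow> count V (t + int d) \<ge> 2"
    proof (induction d)
      case 0 then show ?case using tk by simp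
    next
      case (Suc d)
      show ?case
      proof
        assume a: "t + int (Suc d) < Max (set_mset V)"
        then have "count V (t + int d) \<ge> 2" using Suc by simp
        moreover have "0 \<le> t + int d" unfolding t_def by simp
        moreover have "t + int d < Max (set_mset V) - 1" using a by simp
        ultimately have "count V (t + int d + 1) > 1" using c unfolding condC_def by auto
        moreover have e: "t + int (Suc d) = t + int d + 1" by simp
        ultimately show "count V (t + int (Suc d)) \<ge> 2" unfolding e by linarith
      qed
    qed
  qed
  have "\<forall>j. t \<le> j \<and> j < Max (set_mset V) \<longrightarrow> count V j \<ge> 2"
  proof (intro allI impI)
    fix i assume "t \<le> i \<and> i < Max (set_mset V)"
    then have "i = t + int (nat (i - t))" "t + int (nat (i - t)) < Max (set_mset V)" by auto
    then show "count V i \<ge> 2" using up by metis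
  qed
  then show ?thesis using tin below by blast
next
  case False
  define t where "t = Max (set_mset V)"
  have "t \<in># V" unfolding t_def using ne by (simp add: Max_in)
  moreover have "\<forall>j<t. count V j \<le> 1"
  proof (intro allI impI)
    fix j assume "j < t"
    have "\<not> count V j \<ge> 2" using False by blast
    then show "count V j \<le> 1" by linarith
  qed
  ultimately show ?thesis unfolding t_def by auto
qed

lemma condC_remove:
  assumes c: "condC V" and t: "t \<in># V" and b: "\<forall>j<t. count V j \<le> 1"
  shows "condC (V - {#t#})"
  unfolding condC_def
proof (intro allI impI)
  fix i assume i: "0 \<le> i \<and> i < Max (set_mset (V - {#t#})) - 1" and ci: "count (V - {#t#}) i > 1"
  then have ne: "V - {#t#} \<noteq> {#}" by (metis count_empty not_less_zero)
  have "set_mset (V - {#t#}) \<subseteq> set_mset V" by (meson in_diffD subsetI)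
  then have "Max (set_mset (V - {#t#})) \<le> Max (set_mset V)"
    using ne by (intro Max_mono) auto
  then have i2: "i < Max (set_mset V) - 1" using i by auto
  have "count V i > 1" using ci by (auto split: if_splits)
  then have c1: "count V (i+1) > 1" using c i i2 unfolding condC_def by auto
  have "i + 1 \<noteq> t"
  proof
    assume "i + 1 = t" then have "i < t" by auto
    then show False using b \<open>count V i > 1\<close> by auto
  qed
  then show "count (V - {#t#}) (i+1) > 1" using c1 by auto
qed

lemma lift_step:
  assumes "swp W x y" "\<forall>y. valid y \<and> mset y = W \<longrightarrow> valid (y @ [t])"
  shows "swp (add_mset t W) (x @ [t]) (y @ [t])"
proof -
  have vx: "valid x" "valid y" "mset x = W" "mset y = W" "is_swap x y" using assms(1) unfolding swp_def by auto
  obtain i j where ij: "i < length x" "j < length x" "x!i \<noteq> x!j" "y = x[i := x!j, j := x!i]"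
    using vx(5) unfolding is_swap_def by blast
  have "is_swap (x @ [t]) (y @ [t])"
    unfolding is_swap_def using ij
    by (intro exI[of _ i] exI[of _ j]) (auto simp: nth_append list_update_append1)
  then show ?thesis unfolding swp_def using vx assms(2) by auto
qed

lemma lift:
  assumes "(swp W)\<^sup>*\<^sup>* y1 y2" "\<forall>y. valid y \<and> mset y = W \<longrightarrow> valid (y @ [t])"
  shows "(swp (add_mset t W))\<^sup>*\<^sup>* (y1 @ [t]) (y2 @ [t])"
  using assms(1)
proof (induction rule: rtranclp.induct)
  case (rtrancl_refl a) then show ?case by simp
next
  case (rtrancl_into_rtrancl a b c)
  then show ?case using lift_step[OF _ assms(2)] by (meson rtranclp.rtrancl_into_rtrancl)
qed

lemma in_set_below:
  assumes "valid z" "v \<in> set z" "0 \<le> w" "w \<le> v"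
  shows "w \<in> set z"
proof -
  obtain r where "r < length z" "z!r = v" using assms(2) by (metis in_set_conv_nth)
  then obtain s where "s \<le> r" "z!s = w" using climb[OF assms(1), of r w] assms(3,4) by auto
  then show ?thesis using \<open>r < length z\<close> by (metis le_less_trans nth_mem)
qed

lemma conn:
  "length z1 = n \<Longrightarrow> valid z1 \<Longrightarrow> valid z2 \<Longrightarrow> mset z2 = mset z1 \<Longrightarrow> condC (mset z1)
   \<Longrightarrow> (swp (mset z1))\<^sup>*\<^sup>* z1 z2"
proof (induction n arbitrary: z1 z2)
  case 0
  then have "z1 = []" "z2 = []" by auto
  then show ?case by simp
next
  case (Suc n)
  define V where "V = mset z1"
  have ne: "z1 \<noteq> []" using Suc.prems(1) by auto
  have ne2: "z2 \<noteq> []" using Suc.prems(4) ne by auto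
  have nn: "\<forall>x\<in>#V. 0 \<le> x" unfolding V_def using valid_nonneg[OF Suc.prems(2)] by auto
  have sz2: "set z2 = set z1" using Suc.prems(4) by (metis set_mset_mset)
  obtain t where t: "t \<in># V" "\<forall>j<t. count V j \<le> 1" "\<forall>j. t \<le> j \<and> j < Max (set_mset V) \<longrightarrow> count V j \<ge> 2"
    using choose_t[of V] Suc.prems(5) ne nn unfolding V_def by auto
  have t0: "0 \<le> t" using t(1) nn by auto
  obtain w1 where w1: "(swp V)\<^sup>*\<^sup>* z1 w1" "valid w1" "mset w1 = V" "last w1 = t"
    using to_last_t[OF Suc.prems(2) ne, of t] t unfolding V_def by auto
  obtain w2 where w2: "(swp V)\<^sup>*\<^sup>* z2 w2" "valid w2" "mset w2 = V" "last w2 = t"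
    using to_last_t[OF Suc.prems(3) ne2, of t] t sz2 Suc.prems(4) unfolding V_def by auto
  have w1ne: "w1 \<noteq> []" using w1(3) ne unfolding V_def by auto
  have w2ne: "w2 \<noteq> []" using w2(3) ne unfolding V_def by auto
  define y1 where "y1 = butlast w1"
  define y2 where "y2 = butlast w2"
  have ey1: "w1 = y1 @ [t]" using w1ne w1(4) unfolding y1_def by (metis append_butlast_last_id)
  have ey2: "w2 = y2 @ [t]" using w2ne w2(4) unfolding y2_def by (metis append_butlast_last_id)
  have my1: "mset y1 = V - {#t#}" using w1(3) ey1 by auto
  have my2: "mset y2 = mset y1" using w2(3) ey2 my1 by auto
  have vy1: "valid y1" unfolding y1_def using valid_butlast[OF w1(2)] .
  have vy2: "valid y2" unfolding y2_def using valid_butlast[OF w2(2)] .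
  have "length w1 = Suc n" using w1(3) Suc.prems(1) unfolding V_def by (metis size_mset)
  then have ly1: "length y1 = n" using ey1 by simp
  have cy1: "condC (mset y1)" unfolding my1 by (rule condC_remove) (use Suc.prems(5) t in \<open>auto simp: V_def\<close>)
  have IH: "(swp (mset y1))\<^sup>*\<^sup>* y1 y2" using Suc.IH[OF ly1 vy1 vy2 my2 cy1] .
  have app: "\<forall>y. valid y \<and> mset y = mset y1 \<longrightarrow> valid (y @ [t])"
  proof (intro allI impI)
    fix y assume y: "valid y \<and> mset y = mset y1"
    show "valid (y @ [t])"
    proof (rule valid_snoc)
      show "valid y" using y by simp
      show "0 \<le> t" by (rule t0)
      show "y \<noteq> [] \<longrightarrow> t \<le> last y + 1"
      proof
        assume yne: "y \<noteq> []"
        show "t \<le> last y + 1"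
        proof (cases "t = 0")
          case True then show ?thesis using valid_nonneg[of y "last y"] y yne by simp
        next
          case False
          then have "t - 1 \<in> set z1" using in_set_below[OF Suc.prems(2), of t "t-1"] t(1) t0 unfolding V_def by auto
          then have "t - 1 \<in># mset y" using y my1 unfolding V_def by (simp add: in_diff_count)
          then have "t - 1 \<in> set y" by simp
          moreover have "\<forall>j<t-1. count (mset y) j \<le> 1" using y my1 t(2) by auto
          ultimately have "t - 1 \<le> last y" using last_ge_t[of y "t-1"] y yne by auto
          then show ?thesis by simp
        qed
      qed
      show "y = [] \<longrightarrow> t = 0"
      proof
        assume "y = []"
        then have "V - {#t#} = {#}" using y my1 by simp
        moreover have "V = add_mset t (V - {#t#})" using t(1) by simp
        ultimately have "V = {#t#}" by simp
        then have "z1 = [t]" unfolding V_def by simp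
        then show "t = 0" using Suc.prems(2) unfolding valid_def by auto
      qed
    qed
  qed
  have L: "(swp (add_mset t (mset y1)))\<^sup>*\<^sup>* (y1 @ [t]) (y2 @ [t])" by (rule lift[OF IH app])
  have "add_mset t (mset y1) = V" using my1 t(1) by simp
  then have L': "(swp V)\<^sup>*\<^sup>* w1 w2" using L ey1 ey2 by simp
  have "(swp V)\<^sup>*\<^sup>* w2 z2" by (rule swp_rtc_sym[OF w2(1)])
  have "(swp V)\<^sup>*\<^sup>* z1 w2" by (rule rtranclp_trans[OF w1(1) L'])
  then have "(swp V)\<^sup>*\<^sup>* z1 z2" using \<open>(swp V)\<^sup>*\<^sup>* w2 z2\<close> by (rule rtranclp_trans)
  then show ?case unfolding V_def .
qed

lemma sorted_valid:
  assumes so: "sorted s" and nn: "\<forall>x\<in>set s. 0 \<le> x" and z: "s \<noteq> [] \<longrightarrow> 0 \<in> set s"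
    and cont: "\<forall>v\<in>set s. \<forall>w. 0 \<le> w \<and> w \<le> v \<longrightarrow> w \<in> set s"
  shows "valid s"
  unfolding valid_def
proof (intro conjI allI impI)
  fix k assume "k < length s" then show "0 \<le> s!k" using nn by auto
next
  assume ne: "s \<noteq> []"
  then obtain m where "m < length s" "s!m = 0" using z by (metis in_set_conv_nth)
  then have "s!0 \<le> 0" using so by (metis le0 sorted_nth_mono)
  moreover have "0 \<le> s!0" using nn ne by auto
  ultimately show "s!0 = 0" by simp
next
  fix k assume k: "Suc k < length s"
  show "s!Suc k \<le> s!k + 1"
  proof (rule ccontr)
    assume "\<not> ?thesis"
    then have gt: "s!k + 1 < s!Suc k" by simp
    have "s!Suc k \<in> set s" using k by simp
    moreover have "0 \<le> s!k" using nn k by simp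
    ultimately have "s!k + 1 \<in> set s" using cont gt by auto
    then obtain m where m: "m < length s" "s!m = s!k + 1" by (metis in_set_conv_nth)
    show False
    proof (cases "m \<le> k")
      case True then have "s!m \<le> s!k" using so k by (simp add: sorted_nth_mono)
      then show False using m by simp
    next
      case False then have "s!Suc k \<le> s!m" using sorted_nth_mono[OF so, of "Suc k" m] m by auto
      then show False using m gt by simp
    qed
  qed
qed

lemma inv_facts:
  assumes v: "valid z" and p: "p < length z" "z!p = a+1" and c: "count (mset z) (a+1) = 1"
    and x: "x \<in> set z" "a+2 \<le> x" and a: "0 \<le> a"
  shows "(\<forall>r<p. z!r \<le> a) \<and> Suc p < length z \<and> z!Suc p = a+2"
proof -
  have uniq: "\<And>r. r < length z \<Longrightarrow> z!r = a+1 \<Longrightarrow> r = p"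
  proof (rule ccontr)
    fix r assume "r < length z" "z!r = a+1" "r \<noteq> p"
    then have "count (mset z) (a+1) \<ge> 2" using count_two[of r p z "a+1"] p by auto
    then show False using c by simp
  qed
  have F1: "\<And>r. r < length z \<Longrightarrow> a+2 \<le> z!r \<Longrightarrow> p < r"
  proof -
    fix r assume r: "r < length z" "a+2 \<le> z!r"
    then obtain s where s: "s \<le> r" "z!s = a+1" using climb[OF v r(1), of "a+1"] a by auto
    then have "s = p" using uniq r by auto
    moreover have "s \<noteq> r" using s r by auto
    ultimately show "p < r" using s by auto
  qed
  have F2: "\<forall>r<p. z!r \<le> a"
  proof (intro allI impI)
    fix r assume "r < p"
    then have "r < length z" "r \<noteq> p" using p by auto
    then have "z!r \<noteq> a+1" using uniq by auto
    moreover have "\<not> a+2 \<le> z!r" using F1[of r] \<open>r < length z\<close> \<open>r < p\<close> by auto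
    ultimately show "z!r \<le> a" by auto
  qed
  obtain r0 where r0: "r0 < length z" "z!r0 = x" using x(1) by (metis in_set_conv_nth)
  define r where "r = (LEAST r. r < length z \<and> a+2 \<le> z!r)"
  have r: "r < length z \<and> a+2 \<le> z!r" unfolding r_def by (rule LeastI[of _ r0]) (use r0 x in auto)
  have pr: "p < r" using F1 r by auto
  have "r = Suc p"
  proof (rule ccontr)
    assume "r \<noteq> Suc p"
    then have "Suc p < r" using pr by auto
    then have r1: "r - 1 < r" "p < r - 1" by auto
    have "z!r \<le> z!(r-1) + 1" using v r r1 unfolding valid_def by (metis Suc_diff_1 gr_implies_not_zero not_gr_zero)
    then have "a+1 \<le> z!(r-1)" using r by simp
    moreover have "r - 1 < length z" using r r1 by auto
    moreover have "z!(r-1) \<noteq> a+1" using uniq[of "r-1"] r1 \<open>r - 1 < length z\<close> by auto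
    ultimately have "a+2 \<le> z!(r-1)" by simp
    moreover have "\<not> (r - 1 < length z \<and> a+2 \<le> z!(r-1))"
      using not_less_Least[of "r-1" "\<lambda>r. r < length z \<and> a+2 \<le> z!r"] r1(1) unfolding r_def by blast
    ultimately show False using r r1 by auto
  qed
  then have "z!Suc p \<le> a+2" using v r p unfolding valid_def by fastforce
  then show ?thesis using F2 r \<open>r = Suc p\<close> by auto
qed

lemma no_move:
  assumes v: "valid z" "valid z'" and m: "mset z' = mset z" and qq: "q \<noteq> q'" "q < length z" "q' < length z"
    and zq: "z!q = a+1" and z': "z' = z[q := z!q', q' := a+1]" and c: "count (mset z) (a+1) = 1"
    and x: "x \<in> set z" "a+2 \<le> x" and a: "0 \<le> a"
  shows False
proof -
  have l: "length z' = length z" using z' by simp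
  have z'q': "z'!q' = a+1" using z' qq by simp
  have z'q: "z'!q = z!q'" using z' qq by simp
  have z'o: "\<And>k. k \<noteq> q \<Longrightarrow> k \<noteq> q' \<Longrightarrow> z'!k = z!k" using z' by simp
  have A: "(\<forall>r<q. z!r \<le> a) \<and> Suc q < length z \<and> z!Suc q = a+2"
    by (rule inv_facts[OF v(1) qq(2) zq c x a])
  have x': "x \<in> set z'" using x m by (metis set_mset_mset)
  have B: "(\<forall>r<q'. z'!r \<le> a) \<and> Suc q' < length z' \<and> z'!Suc q' = a+2"
    by (rule inv_facts[OF v(2) _ z'q' _ x' x(2) a]) (use qq l m c in auto)
  show False
  proof (cases "q' < q")
    case True
    show False
    proof (cases "Suc q' = q")
      case True
      then have "z'!Suc q' = z!q'" using z'q by simp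
      moreover have "z!q' \<le> a" using A \<open>q' < q\<close> by auto
      ultimately show False using B by simp
    next
      case False
      then have "Suc q' < q" using \<open>q' < q\<close> by auto
      then have "z'!Suc q' = z!Suc q'" using z'o by auto
      moreover have "z!Suc q' \<le> a" using A \<open>Suc q' < q\<close> by auto
      ultimately show False using B by simp
    qed
  next
    case False
    then have "q < q'" using qq by auto
    then have zq': "z'!q \<le> a" using B by auto
    show False
    proof (cases "Suc q = q'")
      case True
      then have "z'!q = a+2" using z'q A by simp
      then show False using zq' by simp
    next
      case False
      then have "Suc q < q'" using \<open>q < q'\<close> by auto
      then have "z'!Suc q \<le> a" using B by auto
      moreover have "z'!Suc q = z!Suc q" using z'o \<open>Suc q < q'\<close> by auto
      ultimately show False using A by simp
    qed
  qed
qed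

lemma inv_step:
  assumes s: "swp V z z'" and q: "q < length z" "z!q = a+1" and c: "count V (a+1) = 1"
    and x: "x \<in># V" "a+2 \<le> x" and a: "0 \<le> a"
  shows "z'!q = a+1"
proof -
  have v: "valid z" "valid z'" "mset z = V" "mset z' = V" using s unfolding swp_def by auto
  obtain i j where ij: "i < length z" "j < length z" "z!i \<noteq> z!j" "z' = z[i := z!j, j := z!i]"
    using s unfolding swp_def is_swap_def by blast
  have x': "x \<in> set z" using x v(3) by auto
  have c': "count (mset z) (a+1) = 1" using c v(3) by simp
  show ?thesis
  proof (cases "q = i \<or> q = j")
    case False then show ?thesis using ij q by simp
  next
    case True
    then show ?thesis
    proof
      assume "q = i"
      then have "z' = z[q := z!j, j := a+1]" using ij q by simp
      moreover have "q \<noteq> j" using ij \<open>q = i\<close> by auto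
      ultimately show ?thesis using no_move[OF v(1,2) _ _ q(1) ij(2) q(2) _ c' x' x(2) a] v by auto
    next
      assume "q = j"
      have "q \<noteq> i" using ij \<open>q = j\<close> by auto
      then have "z' = z[q := z!i, i := a+1]" using ij q \<open>q = j\<close> by (simp add: list_update_swap)
      then show ?thesis using no_move[OF v(1,2) _ _ q(1) ij(1) q(2) _ c' x' x(2) a] v \<open>q \<noteq> i\<close> by auto
    qed
  qed
qed

lemma inv_rtc:
  assumes "(swp V)\<^sup>*\<^sup>* z z'" "q < length z" "z!q = a+1" "count V (a+1) = 1"
    "x \<in># V" "a+2 \<le> x" "0 \<le> a"
  shows "z'!q = a+1"
  using assms
proof (induction rule: rtranclp.induct)
  case (rtrancl_refl a) then show ?case by simp
next
  case (rtrancl_into_rtrancl z y z')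
  have "y!q = a+1" using rtrancl_into_rtrancl by auto
  moreover have "length y = length z"
    using rtrancl_into_rtrancl.hyps(1)
    by (induction rule: rtranclp.induct) (auto simp: swp_def dest!: is_swap_mset dest: mset_eq_length)
  ultimately show ?case using inv_step[OF rtrancl_into_rtrancl.hyps(2)] rtrancl_into_rtrancl.prems by auto
qed

lemma sorted_pos:
  fixes s :: "int list"
  shows "sorted s \<Longrightarrow> b \<in> set s \<Longrightarrow> length (filter (\<lambda>x. x < b) s) < length s \<and> s ! length (filter (\<lambda>x. x < b) s) = b"
proof (induction s)
  case Nil then show ?case by simp
next
  case (Cons y s)
  show ?case
  proof (cases "y < b")
    case True
    then have "b \<in> set s" using Cons.prems by auto
    then show ?thesis using Cons True by auto
  next
    case False
    then have "y = b" using Cons.prems by auto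
    moreover have "filter (\<lambda>x. x < b) s = []" using Cons.prems \<open>y = b\<close> by (auto simp: filter_empty_conv)
    ultimately show ?thesis by simp
  qed
qed

lemma filter_remove1_len:
  "x \<in> set xs \<Longrightarrow> P x \<Longrightarrow> Suc (length (filter P (remove1 x xs))) = length (filter P xs)"
  by (induction xs) auto

lemma length_filter_sort: "length (filter P (sort xs)) = length (filter P xs)"
  by (metis mset_filter mset_sort size_mset)

lemma le_last_sorted:
  assumes "sorted s" "x \<in> set s" shows "x \<le> last s"
proof -
  obtain i where i: "i < length s" "s!i = x" using assms(2) by (metis in_set_conv_nth)
  then have "s \<noteq> []" by auto
  then have "last s = s!(length s - 1)" by (simp add: last_conv_nth)
  moreover have "s!i \<le> s!(length s - 1)" using assms(1) i by (intro sorted_nth_mono) auto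
  ultimately show ?thesis using i by simp
qed

lemma disconn:
  assumes v: "valid z0" and a: "0 \<le> a" "a < Max (set z0) - 1" and ca: "count (mset z0) a > 1"
    and ca1: "\<not> count (mset z0) (a+1) > 1"
  shows "\<exists>z1 z2. valid z1 \<and> valid z2 \<and> mset z1 = mset z0 \<and> mset z2 = mset z0 \<and> \<not> (swp (mset z0))\<^sup>*\<^sup>* z1 z2"
proof -
  define V where "V = mset z0"
  define M where "M = Max (set z0)"
  have "count (mset z0) a > 0" using ca by linarith
  then have "a \<in># mset z0" by (simp only: count_greater_zero_iff)
  then have ain: "a \<in> set z0" by simp
  then have ne: "z0 \<noteq> []" by auto
  have Min: "M \<in> set z0" unfolding M_def using ne by simp
  have a1in: "a+1 \<in> set z0" using in_set_below[OF v Min, of "a+1"] a unfolding M_def by auto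
  have "count V (a+1) > 0" using a1in unfolding V_def by simp
  then have ca1': "count V (a+1) = 1" using ca1 unfolding V_def by linarith
  have nn: "\<forall>x\<in>set z0. 0 \<le> x" using valid_nonneg[OF v] by auto
  have z0in: "0 \<in> set z0" using in_set_below[OF v ain, of 0] a by auto
  have cont: "\<forall>v\<in>set z0. \<forall>w. 0 \<le> w \<and> w \<le> v \<longrightarrow> w \<in> set z0" using in_set_below[OF v] by auto
  define z1 where "z1 = sort z0"
  have vz1: "valid z1" unfolding z1_def
    apply (rule sorted_valid)
    subgoal by simp
    subgoal using nn by simp
    subgoal using z0in by simp
    subgoal using cont by (simp only: set_sort)
    done
  define r where "r = remove1 a z0"
  have mr: "mset r = V - {#a#}" unfolding r_def V_def by simp
  have sr: "set r = set z0"
  proof -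
    have "\<And>x. x \<in># V - {#a#} \<longleftrightarrow> x \<in># V" using ca \<open>a \<in># mset z0\<close> unfolding V_def by (auto simp: in_diff_count)
    then have "set_mset (mset r) = set_mset (mset z0)" unfolding mr V_def by blast
    then show ?thesis by simp
  qed
  define s' where "s' = sort r"
  have vs': "valid s'" unfolding s'_def
    apply (rule sorted_valid)
    subgoal by simp
    subgoal using nn sr by simp
    subgoal using z0in sr by simp
    subgoal using cont by (simp only: set_sort sr)
    done
  have Ms': "M \<in> set s'" unfolding s'_def using Min sr by simp
  then have s'ne: "s' \<noteq> []" by auto
  have "M \<le> last s'" using le_last_sorted[of s' M] Ms' unfolding s'_def by simp
  define z2 where "z2 = s' @ [a]"
  have vz2: "valid z2" unfolding z2_def
    by (rule valid_snoc[OF vs' a(1)]) (use \<open>M \<le> last s'\<close> a s'ne in \<open>auto simp: M_def\<close>)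
  have mz1: "mset z1 = V" unfolding z1_def V_def by simp
  have mz2: "mset z2 = V" unfolding z2_def s'_def using mr ain unfolding V_def by simp
  define c where "c = length (filter (\<lambda>x. x < a+1) z0)"
  have "c < length z1 \<and> z1 ! c = a+1"
    using sorted_pos[of z1 "a+1"] a1in unfolding z1_def c_def by (simp add: length_filter_sort)
  then have c1: "c < length z1" "z1 ! c = a+1" by auto
  define c' where "c' = length (filter (\<lambda>x. x < a+1) r)"
  have "Suc c' = c" unfolding c'_def c_def r_def by (rule filter_remove1_len) (use ain in auto)
  have a1r: "a+1 \<in> set s'" unfolding s'_def using sr a1in by simp
  have "c' < length s' \<and> s' ! c' = a+1"
    using sorted_pos[of s' "a+1"] a1r unfolding s'_def c'_def by (simp add: length_filter_sort)
  then have c2: "c' < length z2" "z2 ! c' = a+1" unfolding z2_def by (auto simp: nth_append)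
  have lz: "length z2 = length z1" using mz1 mz2 by (metis size_mset)
  have "z2 ! c \<noteq> a+1"
  proof
    assume "z2 ! c = a+1"
    then have "count (mset z2) (a+1) \<ge> 2" using count_two[of c c' z2 "a+1"] c1 c2 lz \<open>Suc c' = c\<close> by auto
    then show False using ca1' mz2 by simp
  qed
  moreover have "(swp V)\<^sup>*\<^sup>* z1 z2 \<Longrightarrow> z2 ! c = a+1"
    using inv_rtc[of V z1 z2 c a M] c1 ca1' Min a unfolding V_def M_def by auto
  ultimately have "\<not> (swp V)\<^sup>*\<^sup>* z1 z2" by blast
  then show ?thesis using vz1 vz2 mz1 mz2 unfolding V_def by (intro exI[of _ z1] exI[of _ z2]) simp
qed



definition PL :: "nat list \<Rightarrow> nat \<Rightarrow> (nat \<times> nat) set set" where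
  "PL b k = {S. rook_placement b S \<and> card S = k}"

lemma rook_num_PL: "rook_num k b = card (PL b k)"
  unfolding rook_num_def PL_def by simp

lemma finite_cells: "finite (cells b)"
proof -
  have "cells b \<subseteq> {..<length b} \<times> {..sum_list b}"
    unfolding cells_def using member_le_sum_list by (auto intro: order_trans[OF _ member_le_sum_list])
  then show ?thesis by (rule finite_subset) auto
qed

lemma finite_PL: "finite (PL b k)"
proof -
  have "PL b k \<subseteq> Pow (cells b)" unfolding PL_def rook_placement_def by auto
  then show ?thesis using finite_cells by (rule finite_subset[OF _ finite_Pow_iff[THEN iffD2]])
qed

lemma placement_finite: "rook_placement b S \<Longrightarrow> finite S"
  unfolding rook_placement_def using finite_cells finite_subset by blast

lemma rook_num_0: "rook_num 0 b = 1"
proof -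
  have "PL b 0 = {{}}"
    unfolding PL_def using placement_finite by (auto simp: rook_placement_def)
  then show ?thesis by (simp add: rook_num_PL)
qed

lemma placement_card_le: "rook_placement b S \<Longrightarrow> card S \<le> length b"
proof -
  assume p: "rook_placement b S"
  have "inj_on fst S" using p unfolding rook_placement_def inj_on_def by blast
  then have "card S = card (fst ` S)" by (simp add: card_image)
  also have "fst ` S \<subseteq> {..<length b}" using p unfolding rook_placement_def cells_def by auto
  then have "card (fst ` S) \<le> length b" by (metis card_lessThan card_mono finite_lessThan)
  finally show ?thesis .
qed

lemma rook_num_big: "length b < k \<Longrightarrow> rook_num k b = 0"
proof -
  assume "length b < k"
  then have "PL b k = {}" unfolding PL_def using placement_card_le by fastforce
  then show ?thesis by (simp add: rook_num_PL)
qed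

lemma cells_Cons0: "cells (0 # b) = (\<lambda>(i, j). (Suc i, j)) ` cells b"
proof (rule set_eqI)
  fix p :: "nat \<times> nat"
  obtain i j where p: "p = (i, j)" by (cases p)
  show "p \<in> cells (0 # b) \<longleftrightarrow> p \<in> (\<lambda>(i, j). (Suc i, j)) ` cells b"
  proof (cases i)
    case 0 then show ?thesis unfolding p cells_def by auto
  next
    case (Suc i') then show ?thesis unfolding p cells_def by (auto simp: image_iff)
  qed
qed

lemma rook_num_Cons0: "rook_num k (0 # b) = rook_num k b"
proof -
  define f where "f = (\<lambda>(i::nat, j::nat). (Suc i, j))"
  have injf: "inj f" unfolding f_def inj_def by auto
  have pl: "rook_placement (0 # b) (f ` S) \<longleftrightarrow> rook_placement b S" for S
  proof -
    have c: "f ` S \<subseteq> cells (0 # b) \<longleftrightarrow> S \<subseteq> cells b"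
      unfolding cells_Cons0 f_def[symmetric] using injf by (simp add: inj_image_subset_iff)
    have d: "(\<forall>p\<in>f ` S. \<forall>q\<in>f ` S. p \<noteq> q \<longrightarrow> fst p \<noteq> fst q \<and> snd p \<noteq> snd q) \<longleftrightarrow>
          (\<forall>p\<in>S. \<forall>q\<in>S. p \<noteq> q \<longrightarrow> fst p \<noteq> fst q \<and> snd p \<noteq> snd q)"
    proof -
      have ff: "\<And>p. fst (f p) = Suc (fst p)" "\<And>p. snd (f p) = snd p" by (auto simp: f_def split: prod.splits)
      show ?thesis by (simp add: ff inj_eq[OF injf])
    qed
    show ?thesis unfolding rook_placement_def using c d by simp
  qed
  have "PL (0 # b) k = (image f) ` PL b k"
  proof (rule set_eqI)
    fix S'
    show "S' \<in> PL (0 # b) k \<longleftrightarrow> S' \<in> (image f) ` PL b k"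
    proof
      assume h: "S' \<in> PL (0 # b) k"
      then have "S' \<subseteq> f ` cells b" unfolding PL_def rook_placement_def cells_Cons0 f_def by auto
      then obtain S where S: "S \<subseteq> cells b" "S' = f ` S" by (auto simp: subset_image_iff)
      then have "rook_placement b S" using pl h unfolding PL_def by auto
      moreover have "card S = k" using h S injf unfolding PL_def by (simp add: card_image inj_on_subset)
      ultimately show "S' \<in> (image f) ` PL b k" using S unfolding PL_def by auto
    next
      assume "S' \<in> (image f) ` PL b k"
      then obtain S where "S \<in> PL b k" "S' = f ` S" by auto
      then show "S' \<in> PL (0 # b) k" using pl injf unfolding PL_def by (auto simp: card_image inj_on_subset)
    qed
  qed
  moreover have "inj_on (image f) (PL b k)" using injf by (meson inj_on_image inj_on_subset subset_UNIV)
  ultimately show ?thesis by (simp add: rook_num_PL card_image)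
qed

lemma rook_num_pad: "rook_num k (replicate m 0 @ b) = rook_num k b"
  by (induction m) (simp_all add: rook_num_Cons0)

lemma rook_equiv_pad: "rook_equiv (pad N b) (pad N c) \<longleftrightarrow> rook_equiv b c"
  unfolding rook_equiv_def pad_def by (simp add: rook_num_pad)

lemma cells_snoc: "cells (b @ [h]) = cells b \<union> {(length b, j) | j. 1 \<le> j \<and> j \<le> h}"
  unfolding cells_def by (auto simp: nth_append less_Suc_eq)

lemma cells_fst: "p \<in> cells b \<Longrightarrow> fst p < length b"
  unfolding cells_def by auto

lemma cells_snd: "p \<in> cells b \<Longrightarrow> \<forall>x\<in>set b. x \<le> h \<Longrightarrow> 1 \<le> snd p \<and> snd p \<le> h"
  unfolding cells_def by (auto dest!: nth_mem intro: order_trans)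

lemma rook_num_snoc:
  assumes hb: "\<forall>x\<in>set b. x \<le> h"
  shows "int (rook_num (Suc k) (b @ [h])) = int (rook_num (Suc k) b) + (int h - int k) * int (rook_num k b)"
proof -
  define n where "n = length b"
  define A where "A = {S \<in> PL (b @ [h]) (Suc k). \<forall>p\<in>S. fst p \<noteq> n}"
  define B where "B = {S \<in> PL (b @ [h]) (Suc k). \<exists>p\<in>S. fst p = n}"
  have split: "PL (b @ [h]) (Suc k) = A \<union> B" "A \<inter> B = {}" unfolding A_def B_def by auto
  have fA: "finite A" "finite B" using finite_PL[of "b @ [h]" "Suc k"] unfolding A_def B_def by auto
  have cellsb: "S \<subseteq> cells (b @ [h]) \<and> (\<forall>p\<in>S. fst p \<noteq> n) \<longleftrightarrow> S \<subseteq> cells b" for S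
    unfolding cells_snoc n_def using cells_fst by fastforce
  have AA: "A = PL b (Suc k)"
    unfolding A_def PL_def rook_placement_def using cellsb by blast
  define Sig where "Sig = Sigma (PL b k) (\<lambda>S0. {1..h} - snd ` S0)"
  define g where "g = (\<lambda>(S0 :: (nat \<times> nat) set, j :: nat). insert (n, j) S0)"
  have noN: "S0 \<in> PL b k \<Longrightarrow> (n, j) \<notin> S0" for S0 j
    unfolding PL_def rook_placement_def n_def using cells_fst by fastforce
  have BB: "B = g ` Sig"
  proof (rule set_eqI)
    fix S
    show "S \<in> B \<longleftrightarrow> S \<in> g ` Sig"
    proof
      assume "S \<in> B"
      then have S: "rook_placement (b @ [h]) S" "card S = Suc k" and "\<exists>p\<in>S. fst p = n"
        unfolding B_def PL_def by auto
      then obtain j where j: "(n, j) \<in> S" by (metis prod.collapse)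
      define S0 where "S0 = S - {(n, j)}"
      have fin: "finite S" using S(1) by (rule placement_finite)
      have dis: "\<forall>p\<in>S. \<forall>q\<in>S. p \<noteq> q \<longrightarrow> fst p \<noteq> fst q \<and> snd p \<noteq> snd q"
        using S(1) unfolding rook_placement_def by auto
      have S0n: "\<forall>p\<in>S0. fst p \<noteq> n" using dis j unfolding S0_def by fastforce
      have "S0 \<subseteq> cells (b @ [h])" using S(1) unfolding S0_def rook_placement_def by auto
      then have S0c: "S0 \<subseteq> cells b" using cellsb S0n by blast
      have pS0: "rook_placement b S0" using S0c dis unfolding rook_placement_def S0_def by auto
      have cS0: "card S0 = k" using S(2) j fin unfolding S0_def by simp
      have jc: "(n, j) \<in> cells (b @ [h])" using j S(1) unfolding rook_placement_def by auto
      then have jh: "j \<in> {1..h}" unfolding cells_def n_def by (auto simp: nth_append)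
      have "j \<notin> snd ` S0" using dis j unfolding S0_def by force
      then have "(S0, j) \<in> Sig" unfolding Sig_def PL_def using pS0 cS0 jh by auto
      moreover have "S = g (S0, j)" unfolding g_def S0_def using j by auto
      ultimately show "S \<in> g ` Sig" by blast
    next
      assume "S \<in> g ` Sig"
      then obtain S0 j where sj: "(S0, j) \<in> Sig" "S = insert (n, j) S0" unfolding g_def by auto
      then have S0: "S0 \<in> PL b k" "j \<in> {1..h}" "j \<notin> snd ` S0" unfolding Sig_def by auto
      have p0: "rook_placement b S0" "card S0 = k" using S0 unfolding PL_def by auto
      have nS0: "(n, j) \<notin> S0" using noN[OF S0(1)] .
      have fin: "finite S0" using p0(1) by (rule placement_finite)
      have c: "S \<subseteq> cells (b @ [h])" using p0(1) S0(2) unfolding sj(2) rook_placement_def cells_snoc n_def by auto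
      have fstS0: "\<forall>p\<in>S0. fst p \<noteq> n" using p0(1) cells_fst unfolding rook_placement_def n_def by fastforce
      have d: "\<forall>p\<in>S. \<forall>q\<in>S. p \<noteq> q \<longrightarrow> fst p \<noteq> fst q \<and> snd p \<noteq> snd q"
        using p0(1) S0(3) fstS0 unfolding sj(2) rook_placement_def by (auto simp: image_iff)
      have "card S = Suc k" using fin nS0 p0(2) unfolding sj(2) by simp
      then show "S \<in> B" unfolding B_def PL_def rook_placement_def using c d sj(2) by auto
    qed
  qed
  have injg: "inj_on g Sig"
  proof (rule inj_onI)
    fix x y assume x: "x \<in> Sig" and y: "y \<in> Sig" and e: "g x = g y"
    obtain S0 j where xx: "x = (S0, j)" by (cases x)
    obtain S1 j1 where yy: "y = (S1, j1)" by (cases y)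
    have n0: "\<forall>p\<in>S0. fst p \<noteq> n" "\<forall>p\<in>S1. fst p \<noteq> n"
      using x y unfolding xx yy Sig_def PL_def rook_placement_def n_def using cells_fst by fastforce+
    have e': "insert (n, j) S0 = insert (n, j1) S1" using e unfolding g_def xx yy by simp
    then have "(n, j) \<in> insert (n, j1) S1" by blast
    then have jj: "j = j1" using n0 by auto
    have "S0 = insert (n, j) S0 - {(n, j)}" using n0 by auto
    also have "\<dots> = insert (n, j1) S1 - {(n, j1)}" using e' jj by simp
    also have "\<dots> = S1" using n0 by auto
    finally show "x = y" unfolding xx yy using jj by simp
  qed
  have cardSig: "card Sig = card (PL b k) * (h - k)"
  proof -
    have each: "card ({1..h} - snd ` S0) = h - k" if "S0 \<in> PL b k" for S0
    proof -
      have p: "rook_placement b S0" "card S0 = k" using that unfolding PL_def by auto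
      have "inj_on snd S0" using p(1) unfolding rook_placement_def inj_on_def by blast
      then have "card (snd ` S0) = k" using p(2) by (simp add: card_image)
      moreover have "snd ` S0 \<subseteq> {1..h}" using p(1) cells_snd[OF _ hb] unfolding rook_placement_def by force
      ultimately show ?thesis by (simp add: card_Diff_subset finite_subset)
    qed
    have "card Sig = (\<Sum>S0\<in>PL b k. card ({1..h} - snd ` S0))"
      unfolding Sig_def by (rule card_SigmaI) (auto simp: finite_PL)
    also have "\<dots> = (\<Sum>S0\<in>PL b k. h - k)" using each by simp
    finally show ?thesis by simp
  qed
  have kh: "PL b k \<noteq> {} \<Longrightarrow> k \<le> h"
  proof -
    assume "PL b k \<noteq> {}"
    then obtain S0 where "S0 \<in> PL b k" by auto
    then have p: "rook_placement b S0" "card S0 = k" unfolding PL_def by auto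
    have "inj_on snd S0" using p(1) unfolding rook_placement_def inj_on_def by blast
    then have "card (snd ` S0) = k" using p(2) by (simp add: card_image)
    moreover have "snd ` S0 \<subseteq> {1..h}" using p(1) cells_snd[OF _ hb] unfolding rook_placement_def by force
    ultimately show "k \<le> h" by (metis card_atLeastAtMost card_mono diff_Suc_1 finite_atLeastAtMost)
  qed
  have "rook_num (Suc k) (b @ [h]) = card A + card B"
    unfolding rook_num_PL split(1) using card_Un_disjoint[OF fA split(2)] .
  also have "card B = card Sig" unfolding BB using injg by (simp add: card_image)
  finally have eq: "rook_num (Suc k) (b @ [h]) = rook_num (Suc k) b + card (PL b k) * (h - k)"
    unfolding AA cardSig rook_num_PL .
  show ?thesis
  proof (cases "PL b k = {}")
    case True then show ?thesis using eq by (simp add: rook_num_PL)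
  next
    case False then have "k \<le> h" by (rule kh)
    then show ?thesis using eq by (simp add: rook_num_PL of_nat_diff)
  qed
qed

definition ff :: "int \<Rightarrow> nat \<Rightarrow> int" where "ff x m = (\<Prod>l<m. x - int l)"

lemma ff_Suc: "ff x (Suc m) = ff x m * (x - int m)"
  unfolding ff_def by simp

lemma ff_0: "ff x 0 = 1" unfolding ff_def by simp

definition RP :: "nat list \<Rightarrow> int \<Rightarrow> int" where
  "RP b x = (\<Sum>k\<le>length b. int (rook_num k b) * ff x (length b - k))"

lemma factor:
  "sorted b \<Longrightarrow> RP b x = (\<Prod>i<length b. x + int (b!i) - int i)"
proof (induction b rule: rev_induct)
  case Nil
  then show ?case unfolding RP_def by (simp add: rook_num_0 ff_0)
next
  case (snoc h b)
  define n where "n = length b"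
  have sb: "sorted b" and hb: "\<forall>y\<in>set b. y \<le> h" using snoc.prems by (auto simp: sorted_append)
  define r where "r = (\<lambda>k. int (rook_num k b))"
  have IH: "(\<Sum>k\<le>n. r k * ff x (n - k)) = (\<Prod>i<n. x + int (b!i) - int i)"
    using snoc.IH[OF sb] unfolding RP_def r_def n_def .
  have rbig: "r (Suc n) = 0" unfolding r_def n_def by (simp add: rook_num_big)
  have rec: "int (rook_num (Suc k) (b @ [h])) = r (Suc k) + (int h - int k) * r k" for k
    unfolding r_def by (rule rook_num_snoc[OF hb])
  have "RP (b @ [h]) x = (\<Sum>k\<le>Suc n. int (rook_num k (b @ [h])) * ff x (Suc n - k))"
    unfolding RP_def n_def by simp
  also have "\<dots> = int (rook_num 0 (b @ [h])) * ff x (Suc n - 0) + (\<Sum>k\<le>n. int (rook_num (Suc k) (b @ [h])) * ff x (Suc n - Suc k))"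
    by (rule sum.atMost_Suc_shift)
  also have "\<dots> = ff x (Suc n) + (\<Sum>k\<le>n. int (rook_num (Suc k) (b @ [h])) * ff x (n - k))"
    by (simp add: rook_num_0)
  also have "\<dots> = ff x (Suc n) + ((\<Sum>k\<le>n. r (Suc k) * ff x (n - k)) + (\<Sum>k\<le>n. (int h - int k) * r k * ff x (n - k)))"
    unfolding rec sum.distrib[symmetric] by (rule arg_cong[where f = "\<lambda>u. ff x (Suc n) + u"], rule sum.cong) (simp_all add: algebra_simps)
  finally have L2: "RP (b @ [h]) x = ff x (Suc n) + ((\<Sum>k\<le>n. r (Suc k) * ff x (n - k)) + (\<Sum>k\<le>n. (int h - int k) * r k * ff x (n - k)))" .
  have T1a: "(\<Sum>k\<le>Suc n. r k * ff x (Suc n - k)) = (\<Sum>k\<le>n. r k * ff x (Suc n - k))"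
    using rbig by (simp add: ff_0)
  have "(\<Sum>k\<le>Suc n. r k * ff x (Suc n - k)) = r 0 * ff x (Suc n - 0) + (\<Sum>k\<le>n. r (Suc k) * ff x (Suc n - Suc k))"
    by (rule sum.atMost_Suc_shift)
  then have T1b: "(\<Sum>k\<le>Suc n. r k * ff x (Suc n - k)) = ff x (Suc n) + (\<Sum>k\<le>n. r (Suc k) * ff x (n - k))"
    by (simp add: r_def rook_num_0)
  have T1c: "(\<Sum>k\<le>n. r k * ff x (Suc n - k)) = (\<Sum>k\<le>n. r k * ff x (n - k) * (x - int (n - k)))"
    by (rule sum.cong) (auto simp: Suc_diff_le ff_Suc)
  have "RP (b @ [h]) x = (\<Sum>k\<le>n. r k * ff x (n - k) * (x - int (n - k))) + (\<Sum>k\<le>n. (int h - int k) * r k * ff x (n - k))"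
    using L2 T1a T1b T1c by linarith
  also have "\<dots> = (\<Sum>k\<le>n. r k * ff x (n - k) * (x + int h - int n))"
    unfolding sum.distrib[symmetric] by (rule sum.cong) (auto simp: algebra_simps of_nat_diff)
  also have "\<dots> = (\<Sum>k\<le>n. r k * ff x (n - k)) * (x + int h - int n)"
    by (simp add: sum_distrib_right)
  also have "\<dots> = (\<Prod>i<n. x + int (b!i) - int i) * (x + int h - int n)" unfolding IH ..
  also have "\<dots> = (\<Prod>i<Suc n. x + int ((b @ [h])!i) - int i)"
    by (simp add: nth_append n_def)
  finally show ?case by (simp add: n_def)
qed

lemma prod_roots: "(\<Prod>i<length d. x + int (d!i) - int i) = (\<Prod>a\<in>#mset (root_vector d). x - a)"
proof -
  have "(\<Prod>a\<in>#mset (root_vector d). x - a) = prod_list (map (\<lambda>a. x - a) (root_vector d))"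
    by (simp add: prod_mset_prod_list mset_map[symmetric] del: mset_map)
  also have "\<dots> = prod_list (map (\<lambda>i. x + int (d!i) - int i) [0..<length d])"
    unfolding root_vector_def by (simp add: o_def algebra_simps)
  also have "\<dots> = (\<Prod>i\<in>set [0..<length d]. x + int (d!i) - int i)"
    by (rule prod.distinct_set_conv_list[symmetric]) simp
  also have "\<dots> = (\<Prod>i<length d. x + int (d!i) - int i)" by (simp add: atLeast0LessThan)
  finally show ?thesis by simp
qed

definition LP :: "int multiset \<Rightarrow> int poly" where
  "LP A = (\<Prod>a\<in>#A. [:-a, 1:])"

lemma poly_LP: "poly (LP A) x = (\<Prod>a\<in>#A. x - a)"
  unfolding LP_def by (simp add: poly_prod_mset)

lemma LP_inj: "LP A = LP B \<Longrightarrow> A = B"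
proof (induction A arbitrary: B)
  case empty
  show ?case
  proof (rule ccontr)
    assume "{#} \<noteq> B"
    then obtain b where "b \<in># B" by (metis multiset_nonemptyE)
    then have "poly (LP B) b = 0" unfolding poly_LP by (auto simp: prod_mset_zero_iff)
    moreover have "poly (LP {#}) b = 1" unfolding poly_LP by simp
    ultimately show False using empty by simp
  qed
next
  case (add a A)
  have "poly (LP (add_mset a A)) a = 0" unfolding poly_LP by simp
  then have "poly (LP B) a = 0" using add.prems by simp
  then have "0 \<in># image_mset (\<lambda>b. a - b) B" unfolding poly_LP by (simp add: prod_mset_zero_iff)
  then obtain b where "b \<in># B" "a - b = 0" by auto
  then have aB: "a \<in># B" by simp
  define B' where "B' = B - {#a#}"
  have BB: "B = add_mset a B'" unfolding B'_def using aB by simp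
  have "[:-a, 1:] * LP A = [:-a, 1:] * LP B'" using add.prems unfolding BB LP_def by simp
  moreover have "[:-a, 1:] \<noteq> (0 :: int poly)" by simp
  ultimately have "LP A = LP B'" by (meson mult_left_cancel)
  then have "A = B'" by (rule add.IH)
  then show ?case unfolding BB by simp
qed

lemma roots_eq:
  assumes "\<And>x::int. (\<Prod>a\<in>#A. x - a) = (\<Prod>a\<in>#B. x - a)"
  shows "A = B"
proof -
  have "poly (LP A) = poly (LP B)" using assms by (simp add: poly_LP fun_eq_iff)
  then have "LP A = LP B" by (simp add: poly_eq_poly_eq_iff)
  then show ?thesis by (rule LP_inj)
qed

lemma ff_zero: assumes "j < m" shows "ff (int j) m = 0"
  unfolding ff_def by (rule prod_zero) (use assms in auto)

lemma ff_nonzero: "ff (int j) j \<noteq> 0"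
  unfolding ff_def by (simp add: prod_zero_iff)

lemma tri:
  fixes a c :: "nat \<Rightarrow> int"
  assumes eq: "\<And>x. (\<Sum>k\<le>n. a k * ff x (n - k)) = (\<Sum>k\<le>n. c k * ff x (n - k))"
  shows "k \<le> n \<Longrightarrow> a k = c k"
proof -
  have main: "j \<le> n \<Longrightarrow> a (n - j) = c (n - j)" for j
  proof (induction j rule: less_induct)
    case (less j)
    define D where "D = (\<lambda>k. (a k - c k) * ff (int j) (n - k))"
    have s0: "(\<Sum>k\<le>n. D k) = 0" unfolding D_def using eq[of "int j"] by (simp add: algebra_simps sum_subtractf)
    have rest: "(\<Sum>k\<in>{..n} - {n - j}. D k) = 0"
    proof (rule sum.neutral, rule ballI)
      fix k assume k: "k \<in> {..n} - {n - j}"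
      then have kn: "k \<le> n" "n - k \<noteq> j" using less.prems by auto
      show "D k = 0"
      proof (cases "n - k < j")
        case True
        then have "a (n - (n - k)) = c (n - (n - k))" using less.IH[of "n - k"] by auto
        then show ?thesis unfolding D_def using kn by simp
      next
        case False
        then have "j < n - k" using kn by auto
        then show ?thesis unfolding D_def by (simp add: ff_zero)
      qed
    qed
    have "(\<Sum>k\<le>n. D k) = D (n - j) + (\<Sum>k\<in>{..n} - {n - j}. D k)"
      by (rule sum.remove) auto
    then have "D (n - j) = 0" using s0 rest by simp
    moreover have "n - (n - j) = j" using less.prems by simp
    ultimately show ?case unfolding D_def using ff_nonzero[of j] by simp
  qed
  assume "k \<le> n"
  then show "a k = c k" using main[of "n - k"] by simp
qed

lemma rook_equiv_iff_roots:
  assumes sb: "sorted b" and sc: "sorted c" and l: "length b = length c"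
  shows "rook_equiv b c \<longleftrightarrow> mset (root_vector b) = mset (root_vector c)"
proof
  assume "rook_equiv b c"
  then have "RP b x = RP c x" for x unfolding RP_def rook_equiv_def using l by simp
  then have "(\<Prod>a\<in>#mset (root_vector b). x - a) = (\<Prod>a\<in>#mset (root_vector c). x - a)" for x
    using factor[OF sb, of x] factor[OF sc, of x] by (simp add: prod_roots)
  then show "mset (root_vector b) = mset (root_vector c)" by (rule roots_eq)
next
  assume m: "mset (root_vector b) = mset (root_vector c)"
  have "RP b x = RP c x" for x
    using factor[OF sb, of x] factor[OF sc, of x] m by (simp add: prod_roots)
  then have e: "(\<Sum>k\<le>length b. int (rook_num k b) * ff x (length b - k)) =
      (\<Sum>k\<le>length b. int (rook_num k c) * ff x (length b - k))" for x
    unfolding RP_def using l by simp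
  show "rook_equiv b c" unfolding rook_equiv_def
  proof
    fix k
    show "rook_num k b = rook_num k c"
    proof (cases "k \<le> length b")
      case True
      then have "int (rook_num k b) = int (rook_num k c)" using tri[OF e] by blast
      then show ?thesis by simp
    next
      case False then show ?thesis using l by (simp add: rook_num_big)
    qed
  qed
qed



lemma rv_nth: "k < length d \<Longrightarrow> root_vector d ! k = int k - int (d!k)"
  unfolding root_vector_def by simp

lemma rv_length[simp]: "length (root_vector d) = length d"
  unfolding root_vector_def by simp

lemma pad_length: "length c \<le> N \<Longrightarrow> length (pad N c) = N"
  unfolding pad_def by simp

lemma pad_self: "pad (length b) b = b"
  unfolding pad_def by simp

lemma sorted_pad: "sorted c \<Longrightarrow> sorted (pad N c)"
  unfolding pad_def by (auto simp: sorted_append)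

lemma pad_pad: "length c \<le> N \<Longrightarrow> N \<le> n \<Longrightarrow> pad n c = replicate (n - N) 0 @ pad N c"
  unfolding pad_def by (simp add: replicate_add[symmetric])

lemma valid_rv:
  assumes s: "sorted d" and nn: "\<forall>z\<in>set (root_vector d). 0 \<le> z"
  shows "valid (root_vector d)"
  unfolding valid_def
proof (intro conjI allI impI)
  fix k assume "k < length (root_vector d)" then show "0 \<le> root_vector d ! k" using nn by auto
next
  assume "root_vector d \<noteq> []"
  then have "0 < length d" by (metis length_greater_0_conv rv_length)
  then have "root_vector d ! 0 = - int (d!0)" by (simp add: rv_nth)
  moreover have "0 \<le> root_vector d ! 0" using nn \<open>0 < length d\<close> by (metis nth_mem rv_length)
  ultimately show "root_vector d ! 0 = 0" by simp
next
  fix k assume k: "Suc k < length (root_vector d)"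
  then have "d!k \<le> d!Suc k" using s by (simp add: sorted_nth_mono)
  then show "root_vector d ! Suc k \<le> root_vector d ! k + 1" using k by (simp add: rv_nth)
qed

definition bd :: "int list \<Rightarrow> nat list" where
  "bd z = map (\<lambda>i. nat (int i - z!i)) [0..<length z]"

definition brd :: "int list \<Rightarrow> nat list" where
  "brd z = dropWhile (\<lambda>x. x = 0) (bd z)"

lemma valid_le: "valid z \<Longrightarrow> k < length z \<Longrightarrow> z!k \<le> int k"
proof (induction k)
  case 0 then show ?case unfolding valid_def by auto
next
  case (Suc k)
  then have "z!Suc k \<le> z!k + 1" unfolding valid_def by auto
  then show ?case using Suc by auto
qed

lemma bd_props:
  assumes v: "valid z"
  shows "length (bd z) = length z" "sorted (bd z)" "root_vector (bd z) = z"
    "\<And>k. k < length z \<Longrightarrow> int (bd z ! k) = int k - z!k"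
proof -
  show l: "length (bd z) = length z" unfolding bd_def by simp
  show e: "\<And>k. k < length z \<Longrightarrow> int (bd z ! k) = int k - z!k"
    unfolding bd_def using valid_le[OF v] by simp
  show "root_vector (bd z) = z"
    by (rule nth_equalityI) (use l e in \<open>auto simp: rv_nth\<close>)
  show "sorted (bd z)" unfolding sorted_iff_nth_mono_less
  proof (intro allI impI)
    fix i j assume ij: "i < j" "j < length (bd z)"
    have "int (bd z ! i) \<le> int (bd z ! j)"
    proof -
      have step: "\<And>d. i + d < length z \<Longrightarrow> int (bd z ! i) \<le> int (bd z ! (i + d))"
      proof -
        fix d show "i + d < length z \<Longrightarrow> int (bd z ! i) \<le> int (bd z ! (i + d))"
        proof (induction d)
          case 0 then show ?case by simp
        next
          case (Suc d)
          have "z ! Suc (i + d) \<le> z ! (i + d) + 1" using v Suc.prems unfolding valid_def by auto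
          then show ?case using Suc e[of "i + d"] e[of "Suc (i + d)"] by auto
        qed
      qed
      show ?thesis using step[of "j - i"] ij l by auto
    qed
    then show "bd z ! i \<le> bd z ! j" by simp
  qed
qed

lemma brd_props:
  assumes v: "valid z"
  shows "canonical_board (brd z)" "length (brd z) \<le> length z" "pad (length z) (brd z) = bd z"
proof -
  define d where "d = bd z"
  have l: "length d = length z" and s: "sorted d" using bd_props[OF v] unfolding d_def by auto
  have dw: "dropWhile (\<lambda>x. x = 0) d = drop (length (takeWhile (\<lambda>x. x = 0) d)) d"
    by (rule dropWhile_eq_drop)
  show sc: "canonical_board (brd z)"
    unfolding canonical_board_def ferrers_def brd_def d_def[symmetric]
  proof
    show "sorted (dropWhile (\<lambda>x. x = 0) d)" unfolding dw using s by (rule sorted_wrt_drop)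
    show "0 \<notin> set (dropWhile (\<lambda>x. x = 0) d)"
    proof
      assume "0 \<in> set (dropWhile (\<lambda>x. x = 0) d)"
      then have ne: "dropWhile (\<lambda>x. x = 0) d \<noteq> []" by (metis empty_iff empty_set)
      then have "hd (dropWhile (\<lambda>x. x = 0) d) \<noteq> 0" using hd_dropWhile by blast
      moreover have "sorted (dropWhile (\<lambda>x. x = 0) d)" unfolding dw using s by (rule sorted_wrt_drop)
      then have "hd (dropWhile (\<lambda>x. x = 0) d) \<le> 0" using \<open>0 \<in> set (dropWhile (\<lambda>x. x = 0) d)\<close> ne
        by (metis list.collapse set_ConsD sorted_simps(2) order_refl)
      ultimately show False by simp
    qed
  qed
  show "length (brd z) \<le> length z" unfolding brd_def d_def[symmetric] using l unfolding dw by simp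
  have tw: "replicate (length (takeWhile (\<lambda>x. x = 0) d)) 0 = takeWhile (\<lambda>x. x = 0) d"
    by (rule replicate_length_same) (auto dest: set_takeWhileD)
  have "length (takeWhile (\<lambda>x. x = 0) d) = length z - length (dropWhile (\<lambda>x. x = 0) d)"
    using l by (metis add_diff_cancel_right' length_append takeWhile_dropWhile_id)
  then show "pad (length z) (brd z) = bd z"
    unfolding pad_def brd_def d_def[symmetric] using tw by (metis takeWhile_dropWhile_id)
qed

lemma brd_rv:
  assumes c: "canonical_board c" and l: "length c \<le> N"
  shows "brd (root_vector (pad N c)) = c"
proof -
  have lp: "length (pad N c) = N" using l by (rule pad_length)
  have "bd (root_vector (pad N c)) = pad N c"
    by (rule nth_equalityI) (auto simp: bd_def lp rv_nth)
  moreover have "dropWhile (\<lambda>x. x = 0) c = c"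
    using c unfolding canonical_board_def by (cases c) auto
  moreover have "dropWhile (\<lambda>x. x = 0) (replicate (N - length c) 0 @ c) = dropWhile (\<lambda>x. x = 0) c"
    by (rule dropWhile_append2) simp
  ultimately show ?thesis unfolding brd_def pad_def by simp
qed

lemma rv_brd:
  assumes v: "valid z"
  shows "root_vector (pad (length z) (brd z)) = z"
  using brd_props(3)[OF v] bd_props(3)[OF v] by simp

lemma pad_nth: "length c \<le> N \<Longrightarrow> k < N \<Longrightarrow> pad N c ! k = (if k < N - length c then 0 else c ! (k - (N - length c)))"
  unfolding pad_def by (auto simp: nth_append)

lemma rv_pad_b:
  assumes "length b \<le> N"
  shows "root_vector (pad N b) = map int [0..<N - length b] @ map (\<lambda>x. x + int (N - length b)) (root_vector b)"
proof (rule nth_equalityI)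
  show "length (root_vector (pad N b)) = length (map int [0..<N - length b] @ map (\<lambda>x. x + int (N - length b)) (root_vector b))"
    using assms by (simp add: pad_length)
next
  fix k assume "k < length (root_vector (pad N b))"
  then have k: "k < N" using assms by (simp add: pad_length)
  show "root_vector (pad N b) ! k = (map int [0..<N - length b] @ map (\<lambda>x. x + int (N - length b)) (root_vector b)) ! k"
    using k assms by (auto simp: rv_nth pad_length pad_nth nth_append)
qed

lemma count_small:
  assumes nn: "\<forall>z\<in>set (root_vector b). 0 \<le> z" and N: "length b \<le> N" and v: "0 \<le> v" "v < int (N - length b)"
  shows "count (mset (root_vector (pad N b))) v = 1"
proof -
  define m where "m = N - length b"
  have "count (mset (map int [0..<m])) v = 1"
  proof -
    have "mset (map int [0..<m]) = mset_set (set (map int [0..<m]))"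
      by (rule mset_set_set[symmetric]) (simp add: distinct_map)
    moreover have "v \<in> set (map int [0..<m])" using v unfolding m_def by (auto simp: image_iff intro!: bexI[of _ "nat v"])
    ultimately show ?thesis by simp
  qed
  moreover have "count (mset (map (\<lambda>x. x + int m) (root_vector b))) v = 0"
    using nn v unfolding m_def by (auto simp: count_eq_zero_iff)
  ultimately show ?thesis unfolding rv_pad_b[OF N] m_def by simp
qed

lemma len_bound:
  assumes sb: "sorted b" and nn: "\<forall>z\<in>set (root_vector b). 0 \<le> z" and c: "canonical_board c"
    and N: "length b \<le> N" "length c \<le> N"
    and m: "mset (root_vector (pad N c)) = mset (root_vector (pad N b))"
  shows "length c \<le> length b"
proof (rule ccontr)
  assume "\<not> length c \<le> length b"
  then have lt: "length b < length c" by simp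
  define z where "z = root_vector (pad N c)"
  define mm where "mm = N - length b"
  have lz: "length z = N" unfolding z_def using N by (simp add: pad_length)
  have setz: "set z = set (root_vector (pad N b))" unfolding z_def using m by (metis set_mset_mset)
  have nnz: "\<forall>x\<in>set z. 0 \<le> x" unfolding setz rv_pad_b[OF N(1)] using nn by auto
  have sc: "sorted c" using c unfolding canonical_board_def ferrers_def by simp
  have vz: "valid z" unfolding z_def by (rule valid_rv[OF sorted_pad[OF sc]]) (use nnz z_def in simp)
  have cnt: "\<And>v. 0 \<le> v \<Longrightarrow> v < int mm \<Longrightarrow> count (mset z) v = 1"
    unfolding z_def m mm_def by (rule count_small[OF nn N(1)])
  have idl: "l < mm \<Longrightarrow> z!l = int l" for l
  proof (induction l rule: less_induct)
    case (less l)
    have ll: "l < length z" using less.prems lz unfolding mm_def by simp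
    have up: "z!l \<le> int l" by (rule valid_le[OF vz ll])
    show ?case
    proof (rule ccontr)
      assume "z!l \<noteq> int l"
      then have lt2: "z!l < int l" using up by simp
      have nv: "0 \<le> z!l" using nnz ll by simp
      define v where "v = nat (z!l)"
      have vl: "v < l" using lt2 nv unfolding v_def by simp
      then have "z!v = int v" using less.IH less.prems by simp
      also have "int v = z!l" unfolding v_def using nv by simp
      finally have "count (mset z) (z!l) \<ge> 2" using count_two[of v l z "z!l"] vl ll by auto
      moreover have "count (mset z) (z!l) = 1" using cnt[OF nv] lt2 less.prems by simp
      ultimately show False by simp
    qed
  qed
  define p where "p = N - length c"
  have pm: "p < mm" unfolding p_def mm_def using lt N by simp
  have "pad N c ! p = c ! 0" using N(2) lt unfolding p_def by (simp add: pad_nth)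
  moreover have "c ! 0 \<in> set c" by (rule nth_mem) (use lt in auto)
  then have "c ! 0 \<noteq> 0" using c unfolding canonical_board_def by metis
  ultimately have "0 < pad N c ! p" by simp
  moreover have "z!p = int p - int (pad N c ! p)" unfolding z_def using pm lz z_def unfolding mm_def
    by (simp add: rv_nth pad_length N(2))
  ultimately have "z!p < int p" by simp
  then show False using idl[OF pm] by simp
qed

lemma vertex_iff:
  assumes sb: "sorted b" and nn: "\<forall>z\<in>set (root_vector b). 0 \<le> z"
  shows "c \<in> rook_vertices b \<longleftrightarrow> canonical_board c \<and> length c \<le> length b \<and>
           mset (root_vector (pad (length b) c)) = mset (root_vector b)"
proof
  assume h: "c \<in> rook_vertices b"
  then have c: "canonical_board c" and e: "rook_equiv b c" unfolding rook_vertices_def by auto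
  have sc: "sorted c" using c unfolding canonical_board_def ferrers_def by simp
  define N where "N = max (length b) (length c)"
  have N: "length b \<le> N" "length c \<le> N" unfolding N_def by auto
  have "rook_equiv (pad N b) (pad N c)" using e by (simp add: rook_equiv_pad)
  then have m: "mset (root_vector (pad N b)) = mset (root_vector (pad N c))"
    using rook_equiv_iff_roots[OF sorted_pad[OF sb] sorted_pad[OF sc]] N by (simp add: pad_length)
  have lc: "length c \<le> length b" by (rule len_bound[OF sb nn c N m[symmetric]])
  then have "N = length b" unfolding N_def by simp
  then show "canonical_board c \<and> length c \<le> length b \<and> mset (root_vector (pad (length b) c)) = mset (root_vector b)"
    using c lc m by (simp add: pad_self)
next
  assume h: "canonical_board c \<and> length c \<le> length b \<and> mset (root_vector (pad (length b) c)) = mset (root_vector b)"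
  have sc: "sorted c" using h unfolding canonical_board_def ferrers_def by simp
  have iff: "rook_equiv (pad (length b) b) (pad (length b) c) \<longleftrightarrow>
      mset (root_vector (pad (length b) b)) = mset (root_vector (pad (length b) c))"
    by (rule rook_equiv_iff_roots[OF sorted_pad[OF sb] sorted_pad[OF sc]]) (use h in \<open>simp add: pad_length\<close>)
  have "rook_equiv (pad (length b) b) (pad (length b) c)"
    unfolding iff using h by (simp add: pad_self)
  then have "rook_equiv b c" by (simp add: rook_equiv_pad)
  then show "c \<in> rook_vertices b" using h unfolding rook_vertices_def by simp
qed

definition E :: "nat \<Rightarrow> nat list \<Rightarrow> nat list \<Rightarrow> bool" where
  "E L d1 d2 \<longleftrightarrow> (\<exists>i j k. i < L \<and> j < L \<and> i \<noteq> j \<and> k > 0 \<and>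
        d1 ! i = d2 ! i + k \<and> d1 ! j + k = d2 ! j \<and>
        (\<forall>l<L. l \<noteq> i \<and> l \<noteq> j \<longrightarrow> d1 ! l = d2 ! l))"

lemma rook_edge_E: "rook_edge c1 c2 \<longleftrightarrow> E (max (length c1) (length c2)) (pad (max (length c1) (length c2)) c1) (pad (max (length c1) (length c2)) c2)"
  unfolding rook_edge_def E_def Let_def by simp

lemma E_pad:
  assumes l: "length d1 = L" "length d2 = L"
  shows "E (m + L) (replicate m 0 @ d1) (replicate m 0 @ d2) \<longleftrightarrow> E L d1 d2"
proof
  assume "E (m + L) (replicate m 0 @ d1) (replicate m 0 @ d2)"
  then obtain i j k where h: "i < m + L" "j < m + L" "i \<noteq> j" "k > 0"
    "(replicate m 0 @ d1) ! i = (replicate m 0 @ d2) ! i + k"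
    "(replicate m 0 @ d1) ! j + k = (replicate m 0 @ d2) ! j"
    "\<forall>l<m + L. l \<noteq> i \<and> l \<noteq> j \<longrightarrow> (replicate m 0 @ d1) ! l = (replicate m 0 @ d2) ! l"
    unfolding E_def by blast
  have im: "m \<le> i"
  proof (rule ccontr)
    assume "\<not> m \<le> i" then show False using h(4,5) by (simp add: nth_append)
  qed
  have jm: "m \<le> j"
  proof (rule ccontr)
    assume "\<not> m \<le> j" then show False using h(4,6) by (simp add: nth_append)
  qed
  show "E L d1 d2" unfolding E_def
  proof (intro exI conjI)
    show "i - m < L" "j - m < L" "i - m \<noteq> j - m" "0 < k" using h im jm by auto
    show "d1 ! (i - m) = d2 ! (i - m) + k" using h(5) im l by (simp add: nth_append)
    show "d1 ! (j - m) + k = d2 ! (j - m)" using h(6) jm l by (simp add: nth_append)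
    show "\<forall>l<L. l \<noteq> i - m \<and> l \<noteq> j - m \<longrightarrow> d1 ! l = d2 ! l"
    proof (intro allI impI)
      fix q assume q: "q < L" "q \<noteq> i - m \<and> q \<noteq> j - m"
      then have "q + m \<noteq> i" "q + m \<noteq> j" "q + m < m + L" using im jm by auto
      then have "(replicate m 0 @ d1) ! (q + m) = (replicate m 0 @ d2) ! (q + m)" using h(7) by blast
      then show "d1 ! q = d2 ! q" by (simp add: nth_append)
    qed
  qed
next
  assume "E L d1 d2"
  then obtain i j k where h: "i < L" "j < L" "i \<noteq> j" "k > 0" "d1 ! i = d2 ! i + k" "d1 ! j + k = d2 ! j"
    "\<forall>l<L. l \<noteq> i \<and> l \<noteq> j \<longrightarrow> d1 ! l = d2 ! l"
    unfolding E_def by blast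
  show "E (m + L) (replicate m 0 @ d1) (replicate m 0 @ d2)" unfolding E_def
  proof (intro exI conjI)
    show "m + i < m + L" "m + j < m + L" "m + i \<noteq> m + j" "0 < k" using h by auto
    show "(replicate m 0 @ d1) ! (m + i) = (replicate m 0 @ d2) ! (m + i) + k" using h l by (simp add: nth_append)
    show "(replicate m 0 @ d1) ! (m + j) + k = (replicate m 0 @ d2) ! (m + j)" using h l by (simp add: nth_append)
    show "\<forall>q<m + L. q \<noteq> m + i \<and> q \<noteq> m + j \<longrightarrow> (replicate m 0 @ d1) ! q = (replicate m 0 @ d2) ! q"
    proof (intro allI impI)
      fix q assume q: "q < m + L" "q \<noteq> m + i \<and> q \<noteq> m + j"
      show "(replicate m 0 @ d1) ! q = (replicate m 0 @ d2) ! q"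
      proof (cases "q < m")
        case True then show ?thesis using l by (simp add: nth_append)
      next
        case False
        then have "q - m < L" "q - m \<noteq> i" "q - m \<noteq> j" using q by auto
        then show ?thesis using h(7) False l by (simp add: nth_append)
      qed
    qed
  qed
qed

lemma sum_list_upd: "k < length xs \<Longrightarrow> sum_list (xs[k := x]) = sum_list xs + x - xs ! (k::nat) " for xs :: "int list"
proof (induction xs arbitrary: k)
  case Nil then show ?case by simp
next
  case (Cons a xs)
  show ?case
  proof (cases k)
    case 0 then show ?thesis by simp
  next
    case (Suc k') then show ?thesis using Cons.IH[of k'] Cons.prems by simp
  qed
qed

lemma sum_map_mset: "mset xs = mset ys \<Longrightarrow> sum_list (map f xs) = sum_list (map f ys)" for f :: "int \<Rightarrow> int"
proof -
  assume m: "mset xs = mset ys"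
  have "sum_list (map f xs) = sum_mset (mset (map f xs))" by (simp only: sum_mset_sum_list)
  also have "\<dots> = sum_mset (mset (map f ys))" by (simp only: mset_map m)
  also have "\<dots> = sum_list (map f ys)" by (simp only: sum_mset_sum_list)
  finally show ?thesis .
qed

lemma E_to_swap:
  assumes l: "length d1 = L" "length d2 = L" and m: "mset (root_vector d1) = mset (root_vector d2)"
    and e: "E L d1 d2"
  shows "is_swap (root_vector d1) (root_vector d2)"
proof -
  define z1 where "z1 = root_vector d1"
  define z2 where "z2 = root_vector d2"
  obtain i j k where h: "i < L" "j < L" "i \<noteq> j" "k > 0" "d1 ! i = d2 ! i + k" "d1 ! j + k = d2 ! j"
    "\<forall>l<L. l \<noteq> i \<and> l \<noteq> j \<longrightarrow> d1 ! l = d2 ! l"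
    using e unfolding E_def by blast
  have lz: "length z1 = L" "length z2 = L" unfolding z1_def z2_def using l by auto
  have zi: "z2 ! i = z1 ! i + int k" unfolding z1_def z2_def using h l by (simp add: rv_nth)
  have zj: "z2 ! j = z1 ! j - int k" unfolding z1_def z2_def using h l by (simp add: rv_nth)
  have zo: "\<And>q. q < L \<Longrightarrow> q \<noteq> i \<Longrightarrow> q \<noteq> j \<Longrightarrow> z2 ! q = z1 ! q"
    unfolding z1_def z2_def using h l by (simp add: rv_nth)
  have z2e: "z2 = z1[i := z1 ! i + int k, j := z1 ! j - int k]"
    by (rule nth_equalityI) (use lz zi zj zo h in \<open>auto simp: nth_list_update\<close>)
  define f where "f = (\<lambda>x::int. x * x)"
  have "sum_list (map f z2) = sum_list (map f z1)" unfolding z1_def z2_def using m[symmetric] by (rule sum_map_mset)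
  moreover have "sum_list (map f z2) = sum_list (map f z1) + f (z1 ! i + int k) - f (z1 ! i) + f (z1 ! j - int k) - f (z1 ! j)"
  proof -
    have "map f z2 = (map f z1)[i := f (z1 ! i + int k), j := f (z1 ! j - int k)]" unfolding z2e by (simp add: map_update)
    moreover have "sum_list ((map f z1)[i := f (z1 ! i + int k)]) = sum_list (map f z1) + f (z1 ! i + int k) - f (z1 ! i)"
      using h lz by (simp add: sum_list_upd)
    moreover have "sum_list ((map f z1)[i := f (z1 ! i + int k), j := f (z1 ! j - int k)]) =
       sum_list ((map f z1)[i := f (z1 ! i + int k)]) + f (z1 ! j - int k) - f (z1 ! j)"
      using h lz by (simp add: sum_list_upd nth_list_update)
    ultimately show ?thesis by simp
  qed
  ultimately have "f (z1 ! i + int k) - f (z1 ! i) + f (z1 ! j - int k) - f (z1 ! j) = 0" by simp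
  then have "2 * int k * (z1 ! i - z1 ! j + int k) = 0" unfolding f_def by (simp add: algebra_simps)
  then have rel: "z1 ! j = z1 ! i + int k" using h(4) by simp
  have "z2 = z1[i := z1 ! j, j := z1 ! i]" unfolding z2e rel by simp
  moreover have "z1 ! i \<noteq> z1 ! j" using rel h(4) by simp
  moreover have "i < length z1" "j < length z1" using h lz by auto
  ultimately show ?thesis unfolding is_swap_def z1_def[symmetric] z2_def[symmetric] by blast
qed

lemma swap_to_E_ord:
  assumes l: "length d1 = L" "length d2 = L" and ij: "i < L" "j < L"
    and lt: "root_vector d1 ! i < root_vector d1 ! j"
    and z2: "root_vector d2 = (root_vector d1)[i := root_vector d1 ! j, j := root_vector d1 ! i]"
  shows "E L d1 d2"
proof -
  define z1 where "z1 = root_vector d1"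
  have ne: "i \<noteq> j" using lt by auto
  have i1: "int (d1 ! q) = int q - z1 ! q" if "q < L" for q unfolding z1_def using l that by (simp add: rv_nth)
  have i2: "int (d2 ! q) = int q - root_vector d2 ! q" if "q < L" for q using l that by (simp add: rv_nth)
  have z2i: "root_vector d2 ! i = z1 ! j" "root_vector d2 ! j = z1 ! i"
    using z2 ij ne l unfolding z1_def by (auto simp: nth_list_update)
  have z2o: "\<And>q. q \<noteq> i \<Longrightarrow> q \<noteq> j \<Longrightarrow> root_vector d2 ! q = z1 ! q" using z2 unfolding z1_def by simp
  define k where "k = nat (z1 ! j - z1 ! i)"
  have k: "int k = z1 ! j - z1 ! i" "k > 0" using lt unfolding k_def z1_def by auto
  show ?thesis unfolding E_def
  proof (intro exI conjI)
    show "i < L" "j < L" "i \<noteq> j" "0 < k" using ij ne k by auto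
    have "int (d1 ! i) = int (d2 ! i) + int k" using i1[OF ij(1)] i2[OF ij(1)] z2i k by simp
    then show "d1 ! i = d2 ! i + k" by linarith
    have "int (d1 ! j) + int k = int (d2 ! j)" using i1[OF ij(2)] i2[OF ij(2)] z2i k by simp
    then show "d1 ! j + k = d2 ! j" by linarith
    show "\<forall>q<L. q \<noteq> i \<and> q \<noteq> j \<longrightarrow> d1 ! q = d2 ! q"
    proof (intro allI impI)
      fix q assume q: "q < L" "q \<noteq> i \<and> q \<noteq> j"
      have "int (d1 ! q) = int (d2 ! q)" using i1[OF q(1)] i2[OF q(1)] z2o q by simp
      then show "d1 ! q = d2 ! q" by simp
    qed
  qed
qed

lemma swap_to_E:
  assumes l: "length d1 = L" "length d2 = L" and s: "is_swap (root_vector d1) (root_vector d2)"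
  shows "E L d1 d2"
proof -
  obtain i j where h: "i < length (root_vector d1)" "j < length (root_vector d1)"
    "root_vector d1 ! i \<noteq> root_vector d1 ! j"
    "root_vector d2 = (root_vector d1)[i := root_vector d1 ! j, j := root_vector d1 ! i]"
    using s unfolding is_swap_def by blast
  have ij: "i < L" "j < L" "i \<noteq> j" using h l by auto
  show ?thesis
  proof (cases "root_vector d1 ! i < root_vector d1 ! j")
    case True show ?thesis by (rule swap_to_E_ord[OF l ij(1,2) True h(4)])
  next
    case False
    then have lt: "root_vector d1 ! j < root_vector d1 ! i" using h(3) by simp
    have "root_vector d2 = (root_vector d1)[j := root_vector d1 ! i, i := root_vector d1 ! j]"
      using h(4) ij(3) by (simp add: list_update_swap)
    then show ?thesis using swap_to_E_ord[OF l ij(2,1) lt] by simp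
  qed
qed

lemma edge_iff_swap:
  assumes c1: "length c1 \<le> n" and c2: "length c2 \<le> n"
    and m: "mset (root_vector (pad n c1)) = mset (root_vector (pad n c2))"
  shows "rook_edge c1 c2 \<longleftrightarrow> is_swap (root_vector (pad n c1)) (root_vector (pad n c2))"
proof -
  define N where "N = max (length c1) (length c2)"
  have N: "length c1 \<le> N" "length c2 \<le> N" "N \<le> n" unfolding N_def using c1 c2 by auto
  have p1: "pad n c1 = replicate (n - N) 0 @ pad N c1" by (rule pad_pad[OF N(1,3)])
  have p2: "pad n c2 = replicate (n - N) 0 @ pad N c2" by (rule pad_pad[OF N(2,3)])
  have "rook_edge c1 c2 \<longleftrightarrow> E N (pad N c1) (pad N c2)" unfolding rook_edge_E N_def ..
  also have "\<dots> \<longleftrightarrow> E ((n - N) + N) (pad n c1) (pad n c2)"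
    unfolding p1 p2 by (rule E_pad[symmetric]) (use N in \<open>auto simp: pad_length\<close>)
  also have "(n - N) + N = n" using N by simp
  also have "E n (pad n c1) (pad n c2) \<longleftrightarrow> is_swap (root_vector (pad n c1)) (root_vector (pad n c2))"
    using E_to_swap[OF _ _ m] swap_to_E c1 c2 by (metis pad_length)
  finally show ?thesis .
qed



lemma rtranclp_map:
  assumes "\<And>x y. R x y \<Longrightarrow> S (f x) (f y)" and "R\<^sup>*\<^sup>* a c"
  shows "S\<^sup>*\<^sup>* (f a) (f c)"
  using assms(2)
proof (induction rule: rtranclp.induct)
  case (rtrancl_refl a) then show ?case by simp
next
  case (rtrancl_into_rtrancl a b c)
  then show ?case using assms(1) by (meson rtranclp.rtrancl_into_rtrancl)
qed

lemma root_count_eq: "root_count b i = count (mset (root_vector b)) i"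
proof -
  have "(\<lambda>z. z = i) = (\<lambda>z. i = z)" by auto
  then show ?thesis unfolding root_count_def by (simp add: count_mset count_list_eq_length_filter)
qed

lemma swp_conn_iff:
  assumes sb: "sorted b" and nn: "\<forall>z\<in>set (root_vector b). 0 \<le> z"
  shows "rook_graph_connected b \<longleftrightarrow>
    (\<forall>z1 z2. valid z1 \<and> mset z1 = mset (root_vector b) \<and> valid z2 \<and> mset z2 = mset (root_vector b)
       \<longrightarrow> (swp (mset (root_vector b)))\<^sup>*\<^sup>* z1 z2)"
proof -
  define n where "n = length b"
  define V where "V = mset (root_vector b)"
  define Vx where "Vx = rook_vertices b"
  define F where "F = (\<lambda>c. root_vector (pad n c))"
  define R where "R = (\<lambda>x y. x \<in> Vx \<and> y \<in> Vx \<and> rook_edge x y)"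
  have vx: "x \<in> Vx \<longleftrightarrow> canonical_board x \<and> length x \<le> n \<and> mset (F x) = V" for x
    unfolding Vx_def F_def V_def n_def using vertex_iff[OF sb nn] by simp
  have v1: "valid (F x) \<and> mset (F x) = V" if "x \<in> Vx" for x
  proof -
    have h: "canonical_board x" "length x \<le> n" "mset (F x) = V" using that vx by auto
    have sx: "sorted x" using h(1) unfolding canonical_board_def ferrers_def by simp
    have "\<forall>z\<in>set (F x). 0 \<le> z" using h(3) nn unfolding V_def by (metis set_mset_mset)
    then have "valid (F x)" unfolding F_def by (rule valid_rv[OF sorted_pad[OF sx]])
    then show ?thesis using h by simp
  qed
  have v2: "brd z \<in> Vx \<and> F (brd z) = z" if "valid z" "mset z = V" for z
  proof -
    have lz: "length z = n" using that(2) unfolding V_def n_def by (metis rv_length size_mset)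
    have "F (brd z) = z" unfolding F_def using rv_brd[OF that(1)] lz by simp
    moreover have "canonical_board (brd z)" "length (brd z) \<le> n" using brd_props[OF that(1)] lz by auto
    ultimately show ?thesis using vx that(2) by simp
  qed
  have v3: "brd (F x) = x" if "x \<in> Vx" for x
    using that vx brd_rv unfolding F_def by simp
  have e1: "rook_edge x y \<longleftrightarrow> is_swap (F x) (F y)" if "x \<in> Vx" "y \<in> Vx" for x y
    unfolding F_def by (rule edge_iff_swap) (use that vx F_def in auto)
  have RS: "swp V (F x) (F y)" if "R x y" for x y
    using that v1 e1 unfolding R_def swp_def by auto
  have SR: "R (brd z1) (brd z2)" if "swp V z1 z2" for z1 z2
  proof -
    have h: "valid z1" "valid z2" "mset z1 = V" "mset z2 = V" "is_swap z1 z2" using that unfolding swp_def by auto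
    have a: "brd z1 \<in> Vx" "F (brd z1) = z1" using v2[OF h(1,3)] by auto
    have b: "brd z2 \<in> Vx" "F (brd z2) = z2" using v2[OF h(2,4)] by auto
    show ?thesis unfolding R_def using a b e1[OF a(1) b(1)] h(5) by simp
  qed
  have conn_def': "rook_graph_connected b \<longleftrightarrow> (\<forall>c1\<in>Vx. \<forall>c2\<in>Vx. R\<^sup>*\<^sup>* c1 c2)"
    unfolding rook_graph_connected_def R_def Vx_def ..
  show ?thesis unfolding V_def[symmetric] conn_def'
  proof
    assume c: "\<forall>c1\<in>Vx. \<forall>c2\<in>Vx. R\<^sup>*\<^sup>* c1 c2"
    show "\<forall>z1 z2. valid z1 \<and> mset z1 = V \<and> valid z2 \<and> mset z2 = V \<longrightarrow> (swp V)\<^sup>*\<^sup>* z1 z2"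
    proof (intro allI impI)
      fix z1 z2 assume h: "valid z1 \<and> mset z1 = V \<and> valid z2 \<and> mset z2 = V"
      then have a: "brd z1 \<in> Vx" "F (brd z1) = z1" "brd z2 \<in> Vx" "F (brd z2) = z2" using v2 by auto
      then have "R\<^sup>*\<^sup>* (brd z1) (brd z2)" using c by auto
      then have "(swp V)\<^sup>*\<^sup>* (F (brd z1)) (F (brd z2))"
        using rtranclp_map[of R "swp V" F "brd z1" "brd z2"] RS by blast
      then show "(swp V)\<^sup>*\<^sup>* z1 z2" using a by simp
    qed
  next
    assume c: "\<forall>z1 z2. valid z1 \<and> mset z1 = V \<and> valid z2 \<and> mset z2 = V \<longrightarrow> (swp V)\<^sup>*\<^sup>* z1 z2"
    show "\<forall>c1\<in>Vx. \<forall>c2\<in>Vx. R\<^sup>*\<^sup>* c1 c2"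
    proof (intro ballI)
      fix c1 c2 assume h: "c1 \<in> Vx" "c2 \<in> Vx"
      then have "(swp V)\<^sup>*\<^sup>* (F c1) (F c2)" using c v1 by auto
      then have "R\<^sup>*\<^sup>* (brd (F c1)) (brd (F c2))"
        using rtranclp_map[of "swp V" R brd "F c1" "F c2"] SR by blast
      then show "R\<^sup>*\<^sup>* c1 c2" using v3 h by simp
    qed
  qed
qed

theorem theorem10:
  fixes b :: "nat list" and M :: int
  assumes "ferrers b"
    and "b \<noteq> []"
    and "\<forall>z\<in>set (root_vector b). z \<ge> 0"
    and "M = Max (set (root_vector b))"
  shows "rook_graph_connected b \<longleftrightarrow>
    (\<forall>i::int. 0 \<le> i \<and> i < M - 1 \<longrightarrow>
       root_count b i > 1 \<longrightarrow> root_count b (i + 1) > 1)"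
proof -
  have sb: "sorted b" using assms(1) unfolding ferrers_def .
  have nn: "\<forall>z\<in>set (root_vector b). 0 \<le> z" using assms(3) by simp
  define V where "V = mset (root_vector b)"
  have vz0: "valid (root_vector b)" by (rule valid_rv[OF sb nn])
  have MV: "M = Max (set_mset V)" unfolding V_def assms(4) by simp
  have cond_iff: "(\<forall>i::int. 0 \<le> i \<and> i < M - 1 \<longrightarrow> root_count b i > 1 \<longrightarrow> root_count b (i + 1) > 1)
      \<longleftrightarrow> condC V"
    unfolding condC_def MV root_count_eq V_def ..
  show ?thesis unfolding cond_iff swp_conn_iff[OF sb nn] V_def[symmetric]
  proof
    assume c: "\<forall>z1 z2. valid z1 \<and> mset z1 = V \<and> valid z2 \<and> mset z2 = V \<longrightarrow> (swp V)\<^sup>*\<^sup>* z1 z2"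
    show "condC V"
    proof (rule ccontr)
      assume "\<not> condC V"
      then obtain i where i: "0 \<le> i" "i < Max (set_mset V) - 1" "count V i > 1" "\<not> count V (i+1) > 1"
        unfolding condC_def by blast
      have "\<exists>z1 z2. valid z1 \<and> valid z2 \<and> mset z1 = mset (root_vector b) \<and> mset z2 = mset (root_vector b) \<and>
              \<not> (swp (mset (root_vector b)))\<^sup>*\<^sup>* z1 z2"
        by (rule disconn[OF vz0]) (use i V_def in auto)
      then show False using c unfolding V_def by blast
    qed
  next
    assume c: "condC V"
    show "\<forall>z1 z2. valid z1 \<and> mset z1 = V \<and> valid z2 \<and> mset z2 = V \<longrightarrow> (swp V)\<^sup>*\<^sup>* z1 z2"
    proof (intro allI impI)
      fix z1 z2 assume h: "valid z1 \<and> mset z1 = V \<and> valid z2 \<and> mset z2 = V"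
      have "(swp (mset z1))\<^sup>*\<^sup>* z1 z2" by (rule conn[of z1 "length z1" z2]) (use h c in auto)
      then show "(swp V)\<^sup>*\<^sup>* z1 z2" using h by simp
    qed
  qed
qed


end
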